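(* Let $T$ be a reduced linear trellis of length $n$. (1) If $S^1,\dots,S^r\le\mathbb{S}(T)$ are subspaces such that $\mathbb{S}_{\mathfrak{s}}(T)=\bigoplus_{i=1}^r\bigl(S^i\cap\mathbb{S}_{\mathfrak{s}}(T)\bigr)$ for every span $\mathfrak{s}$, then $S^i=\mathbb{S}(T(S^i))$ for every $i$, and there is a linear isomorphism $f:T\to\bigotimes_{i=1}^rT(S^i)$ mapping each subtrellis $T(S^i)$ onto the natural copy $0\otimes\cdots\otimes0\otimes T(S^i)\otimes0\otimes\cdots\otimes0$. (2) Conversely, if $T_1,\dots,T_r$ are linear trellises of length $n$ with $\sum_{i=1}^r\dim\mathbb{S}_{(a,0)}(T_i)\le1$ for all $a\in\mathbb{Z}_n$, and $f:T\to\bigotimes_{i=1}^rT_i$ is a linear isomorphism, then for every span $\mathfrak{s}$ $$\mathbb{S}_{\mathfrak{s}}(T)=\bigoplus_{i=1}^r\mathbb{S}_{\mathfrak{s}}\bigl(f^{-1}(0\otimes\cdots\otimes0\otimes T_i\otimes0\otimes\cdots\otimes0)\bigr).$$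
   Context: Let $\mathbb{F}$ be a finite field and $n\ge1$; indices are taken in $\mathbb{Z}_n$. A trellis $T$ of length $n$ over $\mathbb{F}$ consists of pairwise disjoint finite vertex sets $V_i(T)$, $i\in\mathbb{Z}_n$, and edge sets $E_i(T)\subseteq V_i(T)\times\mathbb{F}\times V_{i+1}(T)$; $(v,\alpha,w)\in E_i(T)$ is an edge from $v$ to $w$ with label $\alpha$. Trellises are trim (each vertex has an outgoing and an incoming edge). $T$ is linear if each $V_i(T)$ is an $\mathbb{F}$-vector space and each $E_i(T)$ a subspace. A cycle is a closed path of length $n$ starting in $V_0(T)$, identified with $(\mathbf{v},\boldsymbol{\alpha})\in\prod_iV_i(T)\times\mathbb{F}^n$; $\mathbb{S}(T)$ is the (linear) space of cycles. $T$ is reduced if every edge lies on a cycle. A linear subtrellis $T''\le T$ is a trim subgraph with $V_i(T'')\le V_i(T)$, $E_i(T'')\le E_i(T)$ subspaces; its cycles are cycles of $T$, so $\mathbb{S}(T'')\le\mathbb{S}(T)$. For $S\le\mathbb{S}(T)$, $T(S)$ is the subtrellis of $T$ consisting of all vertices and edges lying on some cycle in $S$. A linear isomorphism $f:T\to T'$ is a family of linear bijections $f_i:V_i(T)\to V_i(T')$ with $(v,\alpha,w)\in E_i(T)\iff(f_i(v),\alpha,f_{i+1}(w))\in E_i(T')$. The product $T\otimes T'$ has $V_i=V_i(T)\times V_i(T')$ and $E_i=\{((v,v'),\alpha+\alpha',(w,w')):(v,\alpha,w)\in E_i(T),(v',\alpha',w')\in E_i(T')\}$; products of several trellises are defined iteratively,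 and $0\otimes\cdots\otimes T_i\otimes\cdots\otimes0$ denotes the linear subtrellis of $\bigotimes_kT_k$ that is the image of $T_i$ under $v\mapsto(0,\dots,0,v,0,\dots,0)$. Spans: for $a\in\mathbb{Z}_n$, $0\le l\le n-1$, $[a,a+l]=\{a,\dots,a+l\}$, $(a,a+l]=[a,a+l]\setminus\{a\}$; $(a,l)$ is a span; also degenerate spans $\emptyset$ and $\mathbb{Z}_n$. A nondegenerate $(a,l)$ is a span of a cycle $(\mathbf{v},\boldsymbol{\alpha})$ if $\{i:v_i\ne0\}\subseteq(a,a+l]$ and $\{i:\alpha_i\ne0\}\subseteq[a,a+l]$; $\emptyset$ is a span only of the zero cycle and $\mathbb{Z}_n$ of every cycle. $\mathbb{S}_{\mathfrak{s}}(T)$ is the subspace of cycles having span $\mathfrak{s}$ (for a subtrellis, its cycles having span $\mathfrak{s}$). *)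

theory Defs
  imports Main HOL.Vector_Spaces "HOL-Library.Function_Algebras" "HOL-Library.Product_Plus" "HOL-Library.Nat_Bijection"
begin

text \<open>Vertices of all trellises are
represented uniformly as coordinate vectors of type nat => 'a (pointwise addition from
Function_Algebras); every finite-dimensional vector space over 'a embeds linearly into this
space, so this loses no generality up to linear isomorphism.  Indices of Z_n are the
naturals 0..n-1; successor is (i+1) mod n.  Outside 0..n-1 all components are empty / zero.\<close>

type_synonym 'a vert = "nat \<Rightarrow> 'a"
type_synonym 'a edge = "'a vert \<times> 'a \<times> 'a vert"
type_synonym 'a cyc = "(nat \<Rightarrow> 'a vert) \<times> (nat \<Rightarrow> 'a)"

record 'a trellis =
  Vt :: "nat \<Rightarrow> 'a vert set"
  Et :: "nat \<Rightarrow> 'a edge set"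

definition nxt :: "nat \<Rightarrow> nat \<Rightarrow> nat" where
  "nxt n i = (Suc i) mod n"

definition prv :: "nat \<Rightarrow> nat \<Rightarrow> nat" where
  "prv n i = (i + n - 1) mod n"

definition vsc :: "'a::field \<Rightarrow> 'a vert \<Rightarrow> 'a vert" where
  "vsc c v = (\<lambda>k. c * v k)"

definition esc :: "'a::field \<Rightarrow> 'a edge \<Rightarrow> 'a edge" where
  "esc c e = (case e of (v, \<alpha>, w) \<Rightarrow> (vsc c v, c * \<alpha>, vsc c w))"

definition csc :: "'a::field \<Rightarrow> 'a cyc \<Rightarrow> 'a cyc" where
  "csc c x = (case x of (v, \<alpha>) \<Rightarrow> (\<lambda>i. vsc c (v i), \<lambda>i. c * \<alpha> i))"

definition is_trellis :: "nat \<Rightarrow> 'a trellis \<Rightarrow> bool" where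
  "is_trellis n T \<longleftrightarrow>
     (\<forall>i<n. finite (Vt T i) \<and> Et T i \<subseteq> Vt T i \<times> UNIV \<times> Vt T (nxt n i)) \<and>
     (\<forall>i<n. \<forall>v\<in>Vt T i. (\<exists>\<alpha> w. (v, \<alpha>, w) \<in> Et T i) \<and> (\<exists>u \<alpha>. (u, \<alpha>, v) \<in> Et T (prv n i))) \<and>
     (\<forall>i\<ge>n. Vt T i = {} \<and> Et T i = {})"

definition linear_trellis :: "nat \<Rightarrow> ('a::field) trellis \<Rightarrow> bool" where
  "linear_trellis n T \<longleftrightarrow> is_trellis n T \<and>
     (\<forall>i<n. module.subspace vsc (Vt T i) \<and> module.subspace esc (Et T i))"

definition cycles :: "nat \<Rightarrow> ('a::zero) trellis \<Rightarrow> 'a cyc set" where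
  "cycles n T = {(v, \<alpha>). (\<forall>i<n. (v i, \<alpha> i, v (nxt n i)) \<in> Et T i) \<and>
                          (\<forall>i\<ge>n. v i = 0 \<and> \<alpha> i = 0)}"

definition reduced :: "nat \<Rightarrow> ('a::zero) trellis \<Rightarrow> bool" where
  "reduced n T \<longleftrightarrow> (\<forall>i<n. \<forall>e\<in>Et T i. \<exists>(v, \<alpha>)\<in>cycles n T. e = (v i, \<alpha> i, v (nxt n i)))"

text \<open>Spans: degenerate spans and (a,l) with a in Z_n, 0 \<le> l \<le> n-1.\<close>
datatype span = SEmpty | SFull | Sp nat nat

definition valid_span :: "nat \<Rightarrow> span \<Rightarrow> bool" where
  "valid_span n s = (case s of Sp a l \<Rightarrow> a < n \<and> l < n | _ \<Rightarrow> True)"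

definition closed_iv :: "nat \<Rightarrow> nat \<Rightarrow> nat \<Rightarrow> nat set" where
  "closed_iv n a l = {(a + j) mod n | j. j \<le> l}"

definition halfopen_iv :: "nat \<Rightarrow> nat \<Rightarrow> nat \<Rightarrow> nat set" where
  "halfopen_iv n a l = closed_iv n a l - {a}"

definition has_span :: "nat \<Rightarrow> span \<Rightarrow> ('a::zero) cyc \<Rightarrow> bool" where
  "has_span n s x = (case x of (v, \<alpha>) \<Rightarrow>
     (case s of SEmpty \<Rightarrow> x = 0
              | SFull \<Rightarrow> True
              | Sp a l \<Rightarrow> {i. i < n \<and> v i \<noteq> 0} \<subseteq> halfopen_iv n a l \<and>
                          {i. i < n \<and> \<alpha> i \<noteq> 0} \<subseteq> closed_iv n a l))"

definition span_cycles :: "nat \<Rightarrow> span \<Rightarrow> ('a::zero) trellis \<Rightarrow> 'a cyc set" where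
  "span_cycles n s T = {x \<in> cycles n T. has_span n s x}"

definition sub_trellis :: "nat \<Rightarrow> 'a cyc set \<Rightarrow> 'a trellis" where
  "sub_trellis n S = \<lparr> Vt = (\<lambda>i. if i < n then {v i | v \<alpha>. (v, \<alpha>) \<in> S} else {}),
                       Et = (\<lambda>i. if i < n then {(v i, \<alpha> i, v (nxt n i)) | v \<alpha>. (v, \<alpha>) \<in> S}
                                  else {}) \<rparr>"

definition direct_sum :: "('b::comm_monoid_add) set \<Rightarrow> (nat \<Rightarrow> 'b set) \<Rightarrow> nat \<Rightarrow> bool" where
  "direct_sum W U r \<longleftrightarrow>
     W = {(\<Sum>k<r. u k) | u. \<forall>k<r. u k \<in> U k} \<and>
     (\<forall>u u'. (\<forall>k<r. u k \<in> U k \<and> u' k \<in> U k) \<and> (\<Sum>k<r. u k) = (\<Sum>k<r. u' k)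
              \<longrightarrow> (\<forall>k<r. u k = u' k))"

definition linear_on :: "('a::field) vert set \<Rightarrow> ('a vert \<Rightarrow> 'a vert) \<Rightarrow> bool" where
  "linear_on V g \<longleftrightarrow> (\<forall>x\<in>V. \<forall>y\<in>V. g (x + y) = g x + g y) \<and>
                     (\<forall>c. \<forall>x\<in>V. g (vsc c x) = vsc c (g x))"

definition trellis_iso :: "nat \<Rightarrow> ('a::field) trellis \<Rightarrow> 'a trellis \<Rightarrow> (nat \<Rightarrow> 'a vert \<Rightarrow> 'a vert) \<Rightarrow> bool" where
  "trellis_iso n T T' f \<longleftrightarrow>
     (\<forall>i<n. linear_on (Vt T i) (f i) \<and> bij_betw (f i) (Vt T i) (Vt T' i)) \<and>
     (\<forall>i<n. \<forall>v\<in>Vt T i. \<forall>w\<in>Vt T (nxt n i). \<forall>\<alpha>.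
         (v, \<alpha>, w) \<in> Et T i \<longleftrightarrow> (f i v, \<alpha>, f (nxt n i) w) \<in> Et T' i)"

text \<open>Products.  A tuple (v_0,...,v_{r-1}) of vertices is encoded linearly and injectively
as a single coordinate vector via prod_encode.\<close>
definition enc :: "nat \<Rightarrow> (nat \<Rightarrow> ('a::zero) vert) \<Rightarrow> 'a vert" where
  "enc r vs = (\<lambda>m. case prod_decode m of (k, j) \<Rightarrow> if k < r then vs k j else 0)"

definition tprod :: "nat \<Rightarrow> nat \<Rightarrow> (nat \<Rightarrow> ('a::comm_monoid_add) trellis) \<Rightarrow> 'a trellis" where
  "tprod n r Ts = \<lparr> Vt = (\<lambda>i. if i < n then {enc r vs | vs. \<forall>k<r. vs k \<in> Vt (Ts k) i} else {}),
                     Et = (\<lambda>i. if i < n then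
                             {(enc r vs, (\<Sum>k<r. \<alpha> k), enc r ws) | vs \<alpha> ws.
                                \<forall>k<r. (vs k, \<alpha> k, ws k) \<in> Et (Ts k) i}
                           else {}) \<rparr>"

definition inj_k :: "nat \<Rightarrow> nat \<Rightarrow> ('a::zero) vert \<Rightarrow> 'a vert" where
  "inj_k r k v = enc r (\<lambda>j. if j = k then v else 0)"

definition copy_k :: "nat \<Rightarrow> nat \<Rightarrow> nat \<Rightarrow> ('a::zero) trellis \<Rightarrow> 'a trellis" where
  "copy_k n r k Tk = \<lparr> Vt = (\<lambda>i. if i < n then inj_k r k ` Vt Tk i else {}),
                        Et = (\<lambda>i. if i < n then
                                {(inj_k r k v, \<alpha>, inj_k r k w) | v \<alpha> w. (v, \<alpha>, w) \<in> Et Tk i}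
                              else {}) \<rparr>"

definition img_trellis :: "nat \<Rightarrow> (nat \<Rightarrow> 'a vert \<Rightarrow> 'a vert) \<Rightarrow> 'a trellis \<Rightarrow> 'a trellis" where
  "img_trellis n f T = \<lparr> Vt = (\<lambda>i. if i < n then f i ` Vt T i else {}),
                          Et = (\<lambda>i. if i < n then
                                  {(f i v, \<alpha>, f (nxt n i) w) | v \<alpha> w. (v, \<alpha>, w) \<in> Et T i}
                                else {}) \<rparr>"

definition preimg_trellis :: "nat \<Rightarrow> (nat \<Rightarrow> 'a vert \<Rightarrow> 'a vert) \<Rightarrow> 'a trellis \<Rightarrow> 'a trellis \<Rightarrow> 'a trellis" where
  "preimg_trellis n f T T'' = \<lparr> Vt = (\<lambda>i. {v \<in> Vt T i. f i v \<in> Vt T'' i}),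
                                 Et = (\<lambda>i. {(v, \<alpha>, w) \<in> Et T i. (f i v, \<alpha>, f (nxt n i) w) \<in> Et T'' i}) \<rparr>"

end

theory Submission
  imports Defs
begin


lemma vs_csc: "vector_space (csc :: ('a::field) \<Rightarrow> 'a cyc \<Rightarrow> 'a cyc)"
  apply unfold_locales
  subgoal for a x y by (cases x; cases y) (simp add: csc_def vsc_def fun_eq_iff algebra_simps)
  subgoal for a b x by (cases x) (simp add: csc_def vsc_def fun_eq_iff algebra_simps)
  subgoal for a b x by (cases x) (simp add: csc_def vsc_def fun_eq_iff algebra_simps)
  subgoal for x by (cases x) (simp add: csc_def vsc_def fun_eq_iff algebra_simps)
  done

interpretation csc: vector_space "csc :: ('a::field) \<Rightarrow> 'a cyc \<Rightarrow> 'a cyc"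
  by (rule vs_csc)

lemma vs_vsc: "vector_space (vsc :: ('a::field) \<Rightarrow> 'a vert \<Rightarrow> 'a vert)"
  by unfold_locales (auto simp: vsc_def fun_eq_iff algebra_simps)

lemma vs_esc: "vector_space (esc :: ('a::field) \<Rightarrow> 'a edge \<Rightarrow> 'a edge)"
  apply unfold_locales
  subgoal for a x y by (cases x; cases y) (simp add: esc_def vsc_def fun_eq_iff algebra_simps)
  subgoal for a b x by (cases x) (simp add: esc_def vsc_def fun_eq_iff algebra_simps)
  subgoal for a b x by (cases x) (simp add: esc_def vsc_def fun_eq_iff algebra_simps)
  subgoal for x by (cases x) (simp add: esc_def vsc_def fun_eq_iff algebra_simps)
  done

lemma subsp_D: "vector_space s \<Longrightarrow> module.subspace s V \<Longrightarrow> 0 \<in> V \<and> (\<forall>x\<in>V. \<forall>y\<in>V. x+y \<in> V) \<and> (\<forall>c. \<forall>x\<in>V. s c x \<in> V)"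
  using module.subspace_def[of s V] module_iff_vector_space by blast

lemma subsp_I: "vector_space s \<Longrightarrow> 0 \<in> V \<Longrightarrow> (\<forall>x\<in>V. \<forall>y\<in>V. x+y \<in> V) \<Longrightarrow> (\<forall>c. \<forall>x\<in>V. s c x \<in> V) \<Longrightarrow> module.subspace s V"
  using module.subspace_def[of s V] module_iff_vector_space by blast

lemma vsc_m1: "vsc (-1) v = - v" by (simp add: vsc_def fun_eq_iff)
lemma esc_m1: "esc (-1) e = - e" by (cases e) (simp add: esc_def vsc_def fun_eq_iff)
lemma csc_m1: "csc (-1) e = - e" by (cases e) (simp add: csc_def vsc_def fun_eq_iff)

lemma sum_fun_app: "(\<Sum>k\<in>A. g k) i = (\<Sum>k\<in>A. g k i)"
  by (induction A rule: infinite_finite_induct) auto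

lemma fst_sum_app: "fst (\<Sum>k\<in>A. x k) i = (\<Sum>k\<in>A. fst (x k) i)"
  by (simp add: fst_sum sum_fun_app)
lemma snd_sum_app: "snd (\<Sum>k\<in>A. x k) i = (\<Sum>k\<in>A. snd (x k) i)"
  by (simp add: snd_sum sum_fun_app)

lemma cycles_iff: "(x::('a::zero) cyc) \<in> cycles n T \<longleftrightarrow> (\<forall>i<n. (fst x i, snd x i, fst x (nxt n i)) \<in> Et T i) \<and> (\<forall>i\<ge>n. fst x i = 0 \<and> snd x i = 0)"
  by (cases x) (simp add: cycles_def)

context
  fixes n :: nat and T :: "('a::field) trellis"
  assumes LT: "linear_trellis n T"
begin

lemma LT_V: "i < n \<Longrightarrow> 0 \<in> Vt T i \<and> (\<forall>x\<in>Vt T i. \<forall>y\<in>Vt T i. x+y \<in> Vt T i) \<and> (\<forall>c. \<forall>x\<in>Vt T i. vsc c x \<in> Vt T i)"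
  using LT unfolding linear_trellis_def using subsp_D[OF vs_vsc] by auto

lemma LT_E: "i < n \<Longrightarrow> 0 \<in> Et T i \<and> (\<forall>x\<in>Et T i. \<forall>y\<in>Et T i. x+y \<in> Et T i) \<and> (\<forall>c. \<forall>x\<in>Et T i. esc c x \<in> Et T i)"
  using LT unfolding linear_trellis_def using subsp_D[OF vs_esc] by auto

lemma V0: "i < n \<Longrightarrow> 0 \<in> Vt T i" using LT_V by blast
lemma Vadd: "i < n \<Longrightarrow> x \<in> Vt T i \<Longrightarrow> y \<in> Vt T i \<Longrightarrow> x + y \<in> Vt T i" using LT_V by blast
lemma Vneg: "i < n \<Longrightarrow> x \<in> Vt T i \<Longrightarrow> - x \<in> Vt T i" using LT_V[of i] vsc_m1 by metis
lemma Vdiff: "i < n \<Longrightarrow> x \<in> Vt T i \<Longrightarrow> y \<in> Vt T i \<Longrightarrow> x - y \<in> Vt T i"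
  using Vadd Vneg by (metis diff_conv_add_uminus)
lemma Vsum: "i < n \<Longrightarrow> (\<forall>k\<in>A. x k \<in> Vt T i) \<Longrightarrow> (\<Sum>k\<in>A. x k) \<in> Vt T i"
  by (induction A rule: infinite_finite_induct) (auto simp: V0 Vadd)

lemma E0: "i < n \<Longrightarrow> (0,0,0) \<in> Et T i" using LT_E[of i] by (simp add: zero_prod_def)
lemma Eadd: "i < n \<Longrightarrow> x \<in> Et T i \<Longrightarrow> y \<in> Et T i \<Longrightarrow> x + y \<in> Et T i" using LT_E by blast
lemma Eneg: "i < n \<Longrightarrow> x \<in> Et T i \<Longrightarrow> - x \<in> Et T i" using LT_E[of i] esc_m1 by metis
lemma Ediff: "i < n \<Longrightarrow> x \<in> Et T i \<Longrightarrow> y \<in> Et T i \<Longrightarrow> x - y \<in> Et T i"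
  using Eadd Eneg by (metis diff_conv_add_uminus)
lemma Esc: "i < n \<Longrightarrow> x \<in> Et T i \<Longrightarrow> esc c x \<in> Et T i" using LT_E by blast

lemma Edom: "i < n \<Longrightarrow> (v, a, w) \<in> Et T i \<Longrightarrow> v \<in> Vt T i \<and> w \<in> Vt T (nxt n i)"
  using LT unfolding linear_trellis_def is_trellis_def by blast

lemma cyc0: "0 \<in> cycles n T"
  by (simp add: cycles_iff E0)

lemma cyc_add: "x \<in> cycles n T \<Longrightarrow> y \<in> cycles n T \<Longrightarrow> x + y \<in> cycles n T"
  unfolding cycles_iff using Eadd by fastforce

lemma cyc_neg: "x \<in> cycles n T \<Longrightarrow> - x \<in> cycles n T"
  unfolding cycles_iff using Eneg by fastforce

lemma cyc_diff: "x \<in> cycles n T \<Longrightarrow> y \<in> cycles n T \<Longrightarrow> x - y \<in> cycles n T"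
  using cyc_add cyc_neg by (metis diff_conv_add_uminus)

lemma cyc_sum: "(\<forall>k\<in>A. x k \<in> cycles n T) \<Longrightarrow> (\<Sum>k\<in>A. x k) \<in> cycles n T"
  by (induction A rule: infinite_finite_induct) (auto simp: cyc0 cyc_add)

lemma cyc_V: "x \<in> cycles n T \<Longrightarrow> i < n \<Longrightarrow> fst x i \<in> Vt T i"
  unfolding cycles_iff using Edom by blast

end


definition prj :: "nat \<Rightarrow> ('a::zero) vert \<Rightarrow> 'a vert" where
  "prj k e = (\<lambda>j. e (prod_encode (k, j)))"

lemma prj_enc: "k < r \<Longrightarrow> prj k (enc r vs) = vs k"
  by (simp add: prj_def enc_def)

lemma enc_cong: "(\<And>k. k < r \<Longrightarrow> a k = b k) \<Longrightarrow> enc r a = enc r b"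
  by (auto simp: enc_def fun_eq_iff split: prod.split)

lemma enc_inj: "enc r a = enc r b \<Longrightarrow> k < r \<Longrightarrow> a k = b k"
  by (metis prj_enc)

lemma enc_prj: "enc r (\<lambda>k. prj k (enc r vs)) = enc r vs"
  by (rule enc_cong) (simp add: prj_enc)

lemma enc_add: "enc r (\<lambda>k. a k + b k) = enc r a + enc r (b :: nat \<Rightarrow> ('a::monoid_add) vert)"
  by (auto simp: enc_def fun_eq_iff split: prod.split)

lemma enc_diff: "enc r (\<lambda>k. a k - b k) = enc r a - enc r (b :: nat \<Rightarrow> ('a::group_add) vert)"
  by (auto simp: enc_def fun_eq_iff split: prod.split)

lemma enc_vsc: "enc r (\<lambda>k. vsc c (a k)) = vsc c (enc r (a :: nat \<Rightarrow> ('a::field) vert))"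
  by (auto simp: enc_def vsc_def fun_eq_iff split: prod.split)

lemma enc_zero: "enc r (\<lambda>k. 0) = 0"
  by (auto simp: enc_def fun_eq_iff split: prod.split)

lemma enc_eq0: "enc r a = 0 \<Longrightarrow> k < r \<Longrightarrow> a k = 0"
  using enc_inj[of r a "\<lambda>k. 0"] enc_zero by metis

lemma inj_k_0: "inj_k r k 0 = 0"
  by (simp add: inj_k_def enc_def fun_eq_iff split: prod.split)

lemma inj_sum: "(\<Sum>k<r. inj_k r k (b k)) = enc r (b :: nat \<Rightarrow> ('a::comm_monoid_add) vert)"
proof (rule ext)
  fix m
  obtain k j where d: "prod_decode m = (k, j)" by (cases "prod_decode m") auto
  show "(\<Sum>k<r. inj_k r k (b k)) m = enc r b m"
    by (simp add: sum_fun_app inj_k_def enc_def d if_distrib[of "\<lambda>x. x j"] cong: if_cong)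
qed

lemma sum_delta_lt: "k < (r::nat) \<Longrightarrow> (\<Sum>j<r. if j = k then x else 0) = (x::'b::comm_monoid_add)"
  by (subst sum.delta) auto

lemma prj_inj_k: "k < r \<Longrightarrow> prj k (inj_k r k v) = v"
  by (simp add: inj_k_def prj_enc)

lemma inj_k_inj: "k < r \<Longrightarrow> inj_k r k v = inj_k r k w \<Longrightarrow> v = w"
  by (metis prj_inj_k)


lemma nxt_lt: "n \<ge> 1 \<Longrightarrow> nxt n i < n" by (simp add: nxt_def)

lemma closed_all: "a < n \<Longrightarrow> m < n \<Longrightarrow> m \<in> closed_iv n a (n - 1)"
proof -
  assume a: "a < n" and m: "m < n"
  define j where "j = (if a \<le> m then m - a else n - a + m)"
  have "j \<le> n - 1" using a m by (auto simp: j_def)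
  moreover have "(a + j) mod n = m"
  proof (cases "a \<le> m")
    case True thus ?thesis using m by (simp add: j_def)
  next
    case False
    hence "a + j = n + m" using a by (simp add: j_def)
    thus ?thesis using m by simp
  qed
  ultimately show ?thesis unfolding closed_iv_def by blast
qed

lemma closed_0: "a < n \<Longrightarrow> closed_iv n a 0 = {a}"
  by (auto simp: closed_iv_def)

lemma halfopen_0: "a < n \<Longrightarrow> halfopen_iv n a 0 = {}"
  by (auto simp: halfopen_iv_def closed_0)

lemma not_in_closed_nxt: "n \<ge> 2 \<Longrightarrow> i < n \<Longrightarrow> i \<notin> closed_iv n (nxt n i) (n - 2)"
proof
  assume n: "n \<ge> 2" and i: "i < n" and "i \<in> closed_iv n (nxt n i) (n - 2)"
  then obtain j where j: "j \<le> n - 2" and e: "(nxt n i + j) mod n = i"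
    unfolding closed_iv_def by auto
  show False
  proof (cases "Suc i < n")
    case True
    hence nx: "nxt n i = Suc i" by (simp add: nxt_def)
    show False
    proof (cases "Suc i + j < n")
      case True thus False using e nx by simp
    next
      case False
      hence "(Suc i + j) mod n = Suc i + j - n" using i j n
        by (simp add: le_mod_geq)
      thus False using e nx j n by simp
    qed
  next
    case False
    hence "Suc i = n" using i by simp
    hence "nxt n i = 0" by (simp add: nxt_def)
    thus False using e j n \<open>Suc i = n\<close> by simp
  qed
qed

lemma in_closed_nxt: "n \<ge> 2 \<Longrightarrow> i < n \<Longrightarrow> m < n \<Longrightarrow> m \<noteq> i \<Longrightarrow> m \<in> closed_iv n (nxt n i) (n - 2)"
proof -
  assume n: "n \<ge> 2" and i: "i < n" and m: "m < n" and mi: "m \<noteq> i"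
  define j where "j = (if i < m then m - i - 1 else n - 1 - i + m)"
  have "j \<le> n - 2" using i m mi n by (auto simp: j_def)
  moreover have "(nxt n i + j) mod n = m"
  proof (cases "Suc i < n")
    case True
    hence nx: "nxt n i = Suc i" by (simp add: nxt_def)
    show ?thesis
    proof (cases "i < m")
      case True thus ?thesis using nx m by (simp add: j_def)
    next
      case False
      hence "Suc i + j = n + m" using i mi by (simp add: j_def)
      thus ?thesis using nx m by simp
    qed
  next
    case False
    hence "Suc i = n" using i by simp
    hence "nxt n i = 0" by (simp add: nxt_def)
    thus ?thesis using \<open>Suc i = n\<close> m mi by (simp add: j_def)
  qed
  ultimately show ?thesis unfolding closed_iv_def by blast
qed

lemma Suc_mod_cancel: "Suc x mod n = Suc y mod n \<Longrightarrow> x mod n = y mod (n::nat)"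
proof -
  assume e: "Suc x mod n = Suc y mod n"
  show ?thesis
  proof (cases "n = 0")
    case True thus ?thesis using e by simp
  next
    case False
    have "x mod n < n" "y mod n < n" using False by auto
    thus ?thesis using e unfolding mod_Suc by (auto split: if_splits)
  qed
qed

lemma nxt_notin_halfopen:
  assumes a: "a < n" and i: "i < n" and ni: "i \<notin> closed_iv n a l"
  shows "nxt n i \<notin> halfopen_iv n a l"
proof
  assume "nxt n i \<in> halfopen_iv n a l"
  then obtain j where j: "j \<le> l" and e: "Suc i mod n = (a + j) mod n" and na: "nxt n i \<noteq> a"
    unfolding halfopen_iv_def closed_iv_def nxt_def by auto
  have "j \<noteq> 0" using e na a by (cases j) (auto simp: nxt_def)
  then have "Suc i mod n = Suc (a + (j - 1)) mod n" using e by simp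
  then have "i mod n = (a + (j - 1)) mod n" by (rule Suc_mod_cancel)
  hence "i = (a + (j - 1)) mod n" using i by simp
  moreover have "j - 1 \<le> l" using j by simp
  ultimately show False using ni unfolding closed_iv_def by blast
qed

lemma halfopen_sub: "halfopen_iv n a l \<subseteq> closed_iv n a l" by (auto simp: halfopen_iv_def)
lemma a_notin_halfopen: "a \<notin> halfopen_iv n a l" by (auto simp: halfopen_iv_def)


definition e_cyc :: "nat \<Rightarrow> 'a \<Rightarrow> ('a::zero) cyc" where
  "e_cyc i c = (\<lambda>_. 0, \<lambda>m. if m = i then c else 0)"

lemma e_cyc_cycles: "linear_trellis n T \<Longrightarrow> i < n \<Longrightarrow> (0, c, 0) \<in> Et T i \<Longrightarrow> e_cyc i c \<in> cycles n T"
proof -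
  assume L: "linear_trellis n T" and i: "i < n" and c: "(0, c, 0) \<in> Et T i"
  show ?thesis unfolding cycles_iff e_cyc_def using E0[OF L] c i by auto
qed

lemma e_cyc_span: "linear_trellis n T \<Longrightarrow> i < n \<Longrightarrow> (0, c, 0) \<in> Et T i \<Longrightarrow> e_cyc i c \<in> span_cycles n (Sp i 0) T"
  using e_cyc_cycles[of n T i c] by (auto simp: span_cycles_def has_span_def e_cyc_def closed_0)

lemma e_cyc_eq0: "e_cyc i c = 0 \<Longrightarrow> c = 0"
proof -
  assume "e_cyc i c = 0"
  hence "snd (e_cyc i c) i = snd 0 i" by simp
  thus ?thesis by (simp add: e_cyc_def)
qed

lemma span0_form: "linear_trellis n T \<Longrightarrow> i < n \<Longrightarrow> x \<in> span_cycles n (Sp i 0) T \<Longrightarrow> x = e_cyc i (snd x i)"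
proof -
  assume L: "linear_trellis n T" and i: "i < n" and x: "x \<in> span_cycles n (Sp i 0) T"
  obtain v a where xv: "x = (v, a)" by (cases x)
  have xc: "(v, a) \<in> cycles n T" and hs: "has_span n (Sp i 0) (v, a)"
    using x unfolding xv span_cycles_def by auto
  have c: "\<forall>m\<ge>n. v m = 0 \<and> a m = 0" using xc unfolding cycles_def by auto
  have h1: "{m. m < n \<and> v m \<noteq> 0} \<subseteq> halfopen_iv n i 0"
    and h2: "{m. m < n \<and> a m \<noteq> 0} \<subseteq> closed_iv n i 0"
    using hs unfolding has_span_def by (simp_all only: span.case prod.case)
  have V: "v m = 0" for m
  proof (cases "m < n")
    case True thus ?thesis using h1 halfopen_0[OF i] by blast
  next
    case False thus ?thesis using c by simp
  qed
  have Av: "a m = (if m = i then a i else 0)" for m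
  proof (cases "m < n")
    case True thus ?thesis using h2 closed_0[OF i] by auto
  next
    case False thus ?thesis using c i by auto
  qed
  have e1: "v = (\<lambda>_. 0)" by (rule ext) (rule V)
  have e2: "a = (\<lambda>m. if m = i then a i else 0)" by (rule ext) (rule Av)
  show ?thesis unfolding xv e_cyc_def snd_conv prod.inject using e1 e2 by blast
qed

lemma span0_finite: "linear_trellis n T \<Longrightarrow> i < n \<Longrightarrow> finite (span_cycles n (Sp i 0) (T :: ('a::{field,finite}) trellis))"
proof -
  assume a: "linear_trellis n T" "i < n"
  have "span_cycles n (Sp i 0) T \<subseteq> range (e_cyc i)"
    using span0_form[OF a] by blast
  thus ?thesis by (rule finite_subset) simp
qed

lemma dim_pos:
  assumes fin: "finite (S :: ('a::field) cyc set)" and e: "e \<in> S" "e \<noteq> 0"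
  shows "csc.dim S \<ge> 1"
proof -
  obtain B where B: "B \<subseteq> S" "csc.independent B" "S \<subseteq> csc.span B"
    using csc.maximal_independent_subset by blast
  have "csc.span B = csc.span S"
    using B by (metis csc.span_mono csc.span_span subset_antisym)
  hence d: "csc.dim S = card B" using csc.dim_eq_card B by blast
  have "B \<noteq> {}" using B e by auto
  moreover have "finite B" using B fin finite_subset by blast
  ultimately show ?thesis using d by (simp add: Suc_le_eq card_gt_0_iff)
qed

lemma lab_unique:
  fixes Ts :: "nat \<Rightarrow> ('a::{field,finite}) trellis"
  assumes LTs: "\<forall>k<r. linear_trellis n (Ts k)"
    and DIM: "\<forall>a<n. (\<Sum>k<r. csc.dim (span_cycles n (Sp a 0) (Ts k))) \<le> 1"
    and i: "i < n"
    and E: "\<forall>k<r. (0, c k, 0) \<in> Et (Ts k) i"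
    and S: "(\<Sum>k<r. c k) = 0"
  shows "\<forall>k<r. c k = 0"
proof (rule ccontr)
  assume "\<not> (\<forall>k<r. c k = 0)"
  then obtain k0 where k0: "k0 < r" "c k0 \<noteq> 0" by auto
  define d where "d k = csc.dim (span_cycles n (Sp i 0) (Ts k))" for k
  have dpos: "d k \<ge> 1" if "k < r" "c k \<noteq> 0" for k
    unfolding d_def
    using dim_pos[OF span0_finite[OF _ i] e_cyc_span[OF _ i]] LTs E that e_cyc_eq0 by blast
  have sum: "(\<Sum>k<r. d k) \<le> 1" using DIM i by (simp add: d_def)
  have others: "c k = 0" if "k < r" "k \<noteq> k0" for k
  proof (rule ccontr)
    assume "c k \<noteq> 0"
    have "(\<Sum>k<r. d k) \<ge> (\<Sum>j\<in>{k0, k}. d j)"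
      by (rule sum_mono2) (use that k0 in auto)
    also have "(\<Sum>j\<in>{k0, k}. d j) = d k0 + d k" using that by simp
    finally show False using dpos[OF k0] dpos[OF that(1) \<open>c k \<noteq> 0\<close>] sum by linarith
  qed
  have "(\<Sum>k<r. c k) = (\<Sum>k<r. if k = k0 then c k0 else 0)"
    by (rule sum.cong) (auto simp: others)
  also have "\<dots> = c k0" using k0 by (simp add: sum_delta_lt)
  finally show False using S k0 by simp
qed


lemma hs_Sp: "has_span n (Sp a l) (v, al) \<longleftrightarrow>
   {i. i < n \<and> v i \<noteq> 0} \<subseteq> halfopen_iv n a l \<and> {i. i < n \<and> al i \<noteq> 0} \<subseteq> closed_iv n a l"
  unfolding has_span_def by (simp only: span.case prod.case)

lemma hs_Empty: "has_span n SEmpty x \<longleftrightarrow> x = 0"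
  by (cases x) (simp only: has_span_def span.case prod.case)

lemma hs_Full: "has_span n SFull x"
  by (cases x) (simp only: has_span_def span.case prod.case)

lemma hs_add:
  fixes x y :: "('a::field) cyc"
  assumes "has_span n s x" "has_span n s y"
  shows "has_span n s (x + y)"
proof (cases s)
  case SEmpty thus ?thesis using assms by (simp add: hs_Empty)
next
  case SFull thus ?thesis by (simp add: hs_Full)
next
  case (Sp a l)
  obtain v al where x: "x = (v, al)" by (cases x)
  obtain v' al' where y: "y = (v', al')" by (cases y)
  have h: "{i. i < n \<and> v i \<noteq> 0} \<subseteq> halfopen_iv n a l" "{i. i < n \<and> al i \<noteq> 0} \<subseteq> closed_iv n a l"
     "{i. i < n \<and> v' i \<noteq> 0} \<subseteq> halfopen_iv n a l" "{i. i < n \<and> al' i \<noteq> 0} \<subseteq> closed_iv n a l"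
    using assms unfolding Sp x y hs_Sp by auto
  have s1: "{i. i < n \<and> (v + v') i \<noteq> 0} \<subseteq> {i. i < n \<and> v i \<noteq> 0} \<union> {i. i < n \<and> v' i \<noteq> 0}" by auto
  have s2: "{i. i < n \<and> (al + al') i \<noteq> 0} \<subseteq> {i. i < n \<and> al i \<noteq> 0} \<union> {i. i < n \<and> al' i \<noteq> 0}" by auto
  show ?thesis unfolding Sp x y add_Pair hs_Sp using h s1 s2 by blast
qed

lemma hs_0: "has_span n s (0 :: ('a::field) cyc)"
  by (cases s) (simp_all add: hs_Empty hs_Full zero_prod_def hs_Sp)

lemma hs_sum: "(\<forall>k\<in>A. has_span n s (x k)) \<Longrightarrow> has_span n s (\<Sum>k\<in>A. x k :: ('a::field) cyc)"
  by (induction A rule: infinite_finite_induct) (auto simp: hs_0 hs_add)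


locale isoS =
  fixes n r :: nat and T :: "('a::{field,finite}) trellis" and Ts :: "nat \<Rightarrow> 'a trellis"
    and f :: "nat \<Rightarrow> 'a vert \<Rightarrow> 'a vert"
  assumes n1: "n \<ge> 1" and LT: "linear_trellis n T"
    and LTs: "\<forall>k<r. linear_trellis n (Ts k)"
    and ISO: "trellis_iso n T (tprod n r Ts) f"
begin

abbreviation "P \<equiv> tprod n r Ts"

lemma VP: "i < n \<Longrightarrow> Vt P i = {enc r vs | vs. \<forall>k<r. vs k \<in> Vt (Ts k) i}"
  by (simp add: tprod_def)

lemma EP: "i < n \<Longrightarrow> Et P i = {(enc r vs, (\<Sum>k<r. \<alpha> k), enc r ws) | vs \<alpha> ws.
                                \<forall>k<r. (vs k, \<alpha> k, ws k) \<in> Et (Ts k) i}"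
  by (simp add: tprod_def)

lemma flin: "i < n \<Longrightarrow> linear_on (Vt T i) (f i)" using ISO by (simp add: trellis_iso_def)
lemma fbij: "i < n \<Longrightarrow> bij_betw (f i) (Vt T i) (Vt P i)" using ISO by (simp add: trellis_iso_def)
lemma fedge: "i < n \<Longrightarrow> v \<in> Vt T i \<Longrightarrow> w \<in> Vt T (nxt n i) \<Longrightarrow>
   (v, \<alpha>, w) \<in> Et T i \<longleftrightarrow> (f i v, \<alpha>, f (nxt n i) w) \<in> Et P i"
  using ISO by (simp add: trellis_iso_def)

lemma finj: "i < n \<Longrightarrow> v \<in> Vt T i \<Longrightarrow> w \<in> Vt T i \<Longrightarrow> f i v = f i w \<Longrightarrow> v = w"
  using fbij by (meson bij_betw_def inj_onD)

lemma fadd: "i < n \<Longrightarrow> v \<in> Vt T i \<Longrightarrow> w \<in> Vt T i \<Longrightarrow> f i (v + w) = f i v + f i w"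
  using flin by (simp add: linear_on_def)

lemma f0: "i < n \<Longrightarrow> f i 0 = 0"
proof -
  assume i: "i < n"
  have "f i (0 + 0) = f i 0 + f i 0" using fadd[OF i] V0[OF LT i] by blast
  thus ?thesis by simp
qed

lemma fsum: "i < n \<Longrightarrow> (\<forall>k\<in>A. v k \<in> Vt T i) \<Longrightarrow> f i (\<Sum>k\<in>A. v k) = (\<Sum>k\<in>A. f i (v k))"
proof (induction A rule: infinite_finite_induct)
  case (infinite A)
  have "f i (sum v A) = f i 0" by (simp only: sum.infinite[OF infinite.hyps])
  also have "\<dots> = 0" using infinite.prems f0 by blast
  also have "0 = (\<Sum>k\<in>A. f i (v k))" by (simp only: sum.infinite[OF infinite.hyps])
  finally show ?case .
next
  case empty
  have "f i (sum v {}) = f i 0" by (simp only: sum.empty)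
  also have "\<dots> = 0" using empty.prems f0 by blast
  also have "0 = (\<Sum>k\<in>{}. f i (v k))" by (simp only: sum.empty)
  finally show ?case .
next
  case (insert x F)
  have vx: "v x \<in> Vt T i" and vF: "\<forall>k\<in>F. v k \<in> Vt T i" using insert.prems by auto
  have "f i (sum v (insert x F)) = f i (v x + sum v F)" by (simp only: sum.insert[OF insert.hyps])
  also have "\<dots> = f i (v x) + f i (sum v F)"
    by (rule fadd[OF insert.prems(1) vx Vsum[OF LT insert.prems(1) vF]])
  also have "\<dots> = f i (v x) + (\<Sum>k\<in>F. f i (v k))" using insert.IH insert.prems(1) vF by simp
  also have "\<dots> = (\<Sum>k\<in>insert x F. f i (v k))" by (simp only: sum.insert[OF insert.hyps])
  finally show ?case .
qed

lemma fV: "i < n \<Longrightarrow> v \<in> Vt T i \<Longrightarrow> f i v \<in> Vt P i"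
  by (rule bij_betw_apply[OF fbij])

definition g :: "nat \<Rightarrow> 'a vert \<Rightarrow> 'a vert" where
  "g i y = the_inv_into (Vt T i) (f i) y"

lemma g: "i < n \<Longrightarrow> y \<in> Vt P i \<Longrightarrow> g i y \<in> Vt T i \<and> f i (g i y) = y"
  unfolding g_def using fbij
  by (metis bij_betw_def f_the_inv_into_f the_inv_into_into order_refl)

lemma g0: "i < n \<Longrightarrow> g i 0 = 0"
  unfolding g_def using fbij f0 V0[OF LT]
  by (metis bij_betw_def the_inv_into_f_f)

lemma enc_prjP: "i < n \<Longrightarrow> y \<in> Vt P i \<Longrightarrow> enc r (\<lambda>k. prj k y) = y"
  using VP enc_prj by fastforce

lemma injV: "k < r \<Longrightarrow> i < n \<Longrightarrow> b \<in> Vt (Ts k) i \<Longrightarrow> inj_k r k b \<in> Vt P i"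
  unfolding VP inj_k_def using LTs V0 by fastforce

lemma injE: "k < r \<Longrightarrow> i < n \<Longrightarrow> (b, c, d) \<in> Et (Ts k) i \<Longrightarrow> (inj_k r k b, c, inj_k r k d) \<in> Et P i"
proof -
  assume k: "k < r" and i: "i < n" and e: "(b, c, d) \<in> Et (Ts k) i"
  let ?vs = "\<lambda>j. if j = k then b else 0" and ?al = "\<lambda>j. if j = k then c else 0"
    and ?ws = "\<lambda>j. if j = k then d else 0"
  have "\<forall>j<r. (?vs j, ?al j, ?ws j) \<in> Et (Ts j) i"
    using e LTs E0 i by auto
  moreover have "(\<Sum>j<r. ?al j) = c" using k by (simp add: sum_delta_lt)
  ultimately show ?thesis unfolding EP[OF i] inj_k_def by force
qed

definition D :: "nat \<Rightarrow> 'a trellis" where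
  "D k = preimg_trellis n f T (copy_k n r k (Ts k))"

lemma ECk: "i < n \<Longrightarrow> Et (copy_k n r k (Ts k)) i = {(inj_k r k v, \<alpha>, inj_k r k w) | v \<alpha> w. (v, \<alpha>, w) \<in> Et (Ts k) i}"
  by (simp add: copy_k_def)

lemma cycD_T: "x \<in> cycles n (D k) \<Longrightarrow> x \<in> cycles n T"
  unfolding cycles_iff D_def preimg_trellis_def by auto

lemma Dk_data:
  assumes k: "k < r" and x: "x \<in> cycles n (D k)" and i: "i < n"
  shows "f i (fst x i) = inj_k r k (prj k (f i (fst x i))) \<and>
         (prj k (f i (fst x i)), snd x i, prj k (f (nxt n i) (fst x (nxt n i)))) \<in> Et (Ts k) i"
proof -
  have "(f i (fst x i), snd x i, f (nxt n i) (fst x (nxt n i))) \<in> Et (copy_k n r k (Ts k)) i"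
    using x i unfolding cycles_iff D_def preimg_trellis_def by auto
  then obtain v al w where e: "f i (fst x i) = inj_k r k v" "f (nxt n i) (fst x (nxt n i)) = inj_k r k w"
     "snd x i = al" "(v, al, w) \<in> Et (Ts k) i"
    unfolding ECk[OF i] by auto
  thus ?thesis using k by (simp add: prj_inj_k)
qed

end


context isoS begin

lemma part2:
  assumes DIM: "\<forall>a<n. (\<Sum>k<r. csc.dim (span_cycles n (Sp a 0) (Ts k))) \<le> 1"
    and VS: "valid_span n s"
  shows "direct_sum (span_cycles n s T) (\<lambda>k. span_cycles n s (D k)) r"
  unfolding direct_sum_def
proof (intro conjI allI impI)
  have nx: "nxt n i < n" for i using nxt_lt[OF n1] .
  show "span_cycles n s T = {\<Sum>k<r. u k | u. \<forall>k<r. u k \<in> span_cycles n s (D k)}"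
  proof (intro equalityI subsetI)
    fix x assume x: "x \<in> span_cycles n s T"
    have xc: "x \<in> cycles n T" and hs: "has_span n s x" using x by (auto simp: span_cycles_def)
    have edge_x: "(fst x i, snd x i, fst x (nxt n i)) \<in> Et T i" if "i < n" for i
      using xc that unfolding cycles_iff by blast
    have vx: "fst x i \<in> Vt T i" if "i < n" for i using cyc_V[OF LT xc that] .
    have "\<forall>i. \<exists>A. i < n \<longrightarrow> (\<forall>k<r. (prj k (f i (fst x i)), A k, prj k (f (nxt n i) (fst x (nxt n i)))) \<in> Et (Ts k) i) \<and> (\<Sum>k<r. A k) = snd x i"
    proof (intro allI)
      fix i
      show "\<exists>A. i < n \<longrightarrow> (\<forall>k<r. (prj k (f i (fst x i)), A k, prj k (f (nxt n i) (fst x (nxt n i)))) \<in> Et (Ts k) i) \<and> (\<Sum>k<r. A k) = snd x i"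
      proof (cases "i < n")
        case False thus ?thesis by blast
      next
        case True
        have "(f i (fst x i), snd x i, f (nxt n i) (fst x (nxt n i))) \<in> Et P i"
          using fedge[OF True vx[OF True] vx[OF nx]] edge_x[OF True] by blast
        then obtain vs al ws where e: "f i (fst x i) = enc r vs" "snd x i = (\<Sum>k<r. al k)"
          "f (nxt n i) (fst x (nxt n i)) = enc r ws" "\<forall>k<r. (vs k, al k, ws k) \<in> Et (Ts k) i"
          unfolding EP[OF True] by auto
        show ?thesis using e by (intro exI[of _ al]) (auto simp: prj_enc)
      qed
    qed
    then obtain A where A: "\<And>i. i < n \<Longrightarrow> (\<forall>k<r. (prj k (f i (fst x i)), A i k, prj k (f (nxt n i) (fst x (nxt n i)))) \<in> Et (Ts k) i) \<and> (\<Sum>k<r. A i k) = snd x i"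
      by metis
    define a where "a k i = prj k (f i (fst x i))" for k i
    have aE: "(a k i, A i k, a k (nxt n i)) \<in> Et (Ts k) i" if "k < r" "i < n" for k i
      using A that unfolding a_def by blast
    have Asum: "(\<Sum>k<r. A i k) = snd x i" if "i < n" for i using A that by blast
    have aV: "a k i \<in> Vt (Ts k) i" if "k < r" "i < n" for k i
      using Edom[OF LTs[rule_format, OF that(1)] that(2) aE[OF that]] by blast
    define u where "u k = (\<lambda>i. if i < n then g i (inj_k r k (a k i)) else 0, \<lambda>i. if i < n then A i k else 0)" for k
    have gu: "g i (inj_k r k (a k i)) \<in> Vt T i \<and> f i (g i (inj_k r k (a k i))) = inj_k r k (a k i)"
      if "k < r" "i < n" for k i
      using g[OF that(2) injV[OF that aV[OF that]]] .
    have ucyc: "u k \<in> cycles n (D k)" if k: "k < r" for k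
      unfolding cycles_iff
    proof (rule conjI)
      show "\<forall>i<n. (fst (u k) i, snd (u k) i, fst (u k) (nxt n i)) \<in> Et (D k) i"
      proof (intro allI impI)
        fix i assume i: "i < n"
        have ni: "nxt n i < n" by (rule nx)
        let ?v = "g i (inj_k r k (a k i))" and ?w = "g (nxt n i) (inj_k r k (a k (nxt n i)))"
        have inT: "(?v, A i k, ?w) \<in> Et T i"
          using fedge[OF i gu[OF k i, THEN conjunct1] gu[OF k ni, THEN conjunct1]] gu[OF k i] gu[OF k ni]
            injE[OF k i aE[OF k i]] by simp
        have inC: "(f i ?v, A i k, f (nxt n i) ?w) \<in> Et (copy_k n r k (Ts k)) i"
          unfolding ECk[OF i] using gu[OF k i] gu[OF k ni] aE[OF k i] by auto
        show "(fst (u k) i, snd (u k) i, fst (u k) (nxt n i)) \<in> Et (D k) i"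
          unfolding u_def D_def preimg_trellis_def using i ni inT inC by simp
      qed
    next
      show "\<forall>i\<ge>n. fst (u k) i = 0 \<and> snd (u k) i = 0" by (simp add: u_def)
    qed
    have a0: "a k i = 0" if "i < n" "fst x i = 0" for k i
      using that f0 by (simp add: a_def prj_def) (simp add: zero_fun_def)
    have ufst0: "fst (u k) i = 0" if "i < n" "fst x i = 0" for k i
      using a0[OF that] that g0 by (simp add: u_def inj_k_0)
    have usnd0: "snd (u k) i = 0" if k: "k < r" and i: "i < n" and z: "fst x i = 0" "fst x (nxt n i) = 0" "snd x i = 0" for k i
    proof -
      have "\<forall>k<r. A i k = 0"
      proof (rule lab_unique[of r n Ts i "A i", OF LTs DIM i])
        show "\<forall>k<r. (0, A i k, 0) \<in> Et (Ts k) i"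
          using aE a0[OF i z(1)] a0[OF nx z(2)] i by metis
        show "(\<Sum>k<r. A i k) = 0" using Asum[OF i] z(3) by simp
      qed
      thus ?thesis using k i by (simp add: u_def)
    qed
    have uspan: "has_span n s (u k)" if k: "k < r" for k
    proof (cases s)
      case SEmpty
      have x0: "x = 0" using hs unfolding SEmpty hs_Empty .
      have f0': "fst x i = 0" "snd x i = 0" for i using x0 by simp_all
      have "fst (u k) i = 0" for i
        by (cases "i < n") (auto simp: ufst0 f0', simp add: u_def)
      moreover have "snd (u k) i = 0" for i
        by (cases "i < n") (auto simp: usnd0[OF k] f0' nx, simp add: u_def)
      ultimately have "u k = 0" by (simp add: prod_eq_iff fun_eq_iff)
      thus ?thesis unfolding SEmpty hs_Empty .
    next
      case SFull thus ?thesis by (simp add: hs_Full)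
    next
      case (Sp a0 l)
      have va: "a0 < n" using VS Sp by (simp add: valid_span_def)
      obtain v al where xv: "x = (v, al)" by (cases x)
      have h1: "{i. i < n \<and> v i \<noteq> 0} \<subseteq> halfopen_iv n a0 l" and h2: "{i. i < n \<and> al i \<noteq> 0} \<subseteq> closed_iv n a0 l"
        using hs unfolding Sp xv hs_Sp by auto
      have s1: "{i. i < n \<and> fst (u k) i \<noteq> 0} \<subseteq> halfopen_iv n a0 l"
      proof
        fix i assume "i \<in> {i. i < n \<and> fst (u k) i \<noteq> 0}"
        hence i: "i < n" and ne: "fst (u k) i \<noteq> 0" by auto
        have "v i \<noteq> 0" using ufst0[OF i] ne xv by auto
        thus "i \<in> halfopen_iv n a0 l" using h1 i by blast
      qed
      have s2: "{i. i < n \<and> snd (u k) i \<noteq> 0} \<subseteq> closed_iv n a0 l"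
      proof
        fix i assume "i \<in> {i. i < n \<and> snd (u k) i \<noteq> 0}"
        hence i: "i < n" and ne: "snd (u k) i \<noteq> 0" by auto
        show "i \<in> closed_iv n a0 l"
        proof (rule ccontr)
          assume ni: "i \<notin> closed_iv n a0 l"
          have z1: "al i = 0" using ni h2 i by blast
          have z2: "v i = 0" using ni h1 i halfopen_sub by blast
          have z3: "v (nxt n i) = 0" using nxt_notin_halfopen[OF va i ni] h1 nx by blast
          show False using usnd0[OF k i] z1 z2 z3 ne xv by simp
        qed
      qed
      show ?thesis unfolding Sp using s1 s2 hs_Sp[of n a0 l "fst (u k)" "snd (u k)"] by simp
    qed
    have usum: "(\<Sum>k<r. u k) = x"
    proof (rule prod_eqI)
      show "fst (\<Sum>k<r. u k) = fst x"
      proof (rule ext)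
        fix i show "fst (\<Sum>k<r. u k) i = fst x i"
        proof (cases "i < n")
          case True
          have mem: "\<forall>k\<in>{..<r}. fst (u k) i \<in> Vt T i" using gu True by (simp add: u_def)
          have "f i (fst (\<Sum>k<r. u k) i) = f i (\<Sum>k<r. fst (u k) i)" by (simp only: fst_sum_app)
          also have "\<dots> = (\<Sum>k<r. f i (fst (u k) i))" using fsum[OF True mem] .
          also have "\<dots> = (\<Sum>k<r. inj_k r k (a k i))" using gu True by (auto simp: u_def intro: sum.cong)
          also have "\<dots> = enc r (\<lambda>k. a k i)" by (rule inj_sum)
          also have "\<dots> = f i (fst x i)" unfolding a_def using enc_prjP[OF True fV[OF True vx[OF True]]] .
          finally have "f i (fst (\<Sum>k<r. u k) i) = f i (fst x i)" .
          moreover have "fst (\<Sum>k<r. u k) i \<in> Vt T i"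
            using Vsum[OF LT True mem] by (simp only: fst_sum_app)
          ultimately show ?thesis using finj[OF True _ vx[OF True]] by blast
        next
          case False thus ?thesis using xc by (simp add: u_def fst_sum_app cycles_iff)
        qed
      qed
      show "snd (\<Sum>k<r. u k) = snd x"
      proof (rule ext)
        fix i show "snd (\<Sum>k<r. u k) i = snd x i"
        proof (cases "i < n")
          case True thus ?thesis using Asum[OF True] by (simp add: u_def snd_sum_app)
        next
          case False thus ?thesis using xc by (simp add: u_def snd_sum_app cycles_iff)
        qed
      qed
    qed
    have "\<forall>k<r. u k \<in> span_cycles n s (D k)" using ucyc uspan by (simp add: span_cycles_def)
    thus "x \<in> {\<Sum>k<r. u k | u. \<forall>k<r. u k \<in> span_cycles n s (D k)}" using usum by blast
  next
    fix y assume "y \<in> {\<Sum>k<r. u k | u. \<forall>k<r. u k \<in> span_cycles n s (D k)}"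
    then obtain u where y: "y = (\<Sum>k<r. u k)" and u: "\<forall>k<r. u k \<in> span_cycles n s (D k)" by auto
    have uD: "\<forall>k\<in>{..<r}. u k \<in> cycles n T"
    proof
      fix k assume "k \<in> {..<r}"
      hence "u k \<in> span_cycles n s (D k)" using u by auto
      hence "u k \<in> cycles n (D k)" unfolding span_cycles_def by blast
      thus "u k \<in> cycles n T" by (rule cycD_T)
    qed
    have "y \<in> cycles n T" unfolding y by (rule cyc_sum[OF LT uD])
    moreover have "has_span n s y" unfolding y
      by (rule hs_sum) (use u in \<open>auto simp: span_cycles_def\<close>)
    ultimately show "y \<in> span_cycles n s T" by (simp add: span_cycles_def)
  qed
next
  fix u u' :: "nat \<Rightarrow> 'a cyc" and k
  assume H: "(\<forall>k<r. u k \<in> span_cycles n s (D k) \<and> u' k \<in> span_cycles n s (D k)) \<and> (\<Sum>k<r. u k) = (\<Sum>k<r. u' k)"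
    and k: "k < r"
  have nx: "nxt n i < n" for i using nxt_lt[OF n1] .
  have uc: "u j \<in> cycles n (D j)" "u' j \<in> cycles n (D j)" if "j < r" for j
    using H that by (auto simp: span_cycles_def)
  define b where "b j i = prj j (f i (fst (u j) i))" for j i
  define b' where "b' j i = prj j (f i (fst (u' j) i))" for j i
  have fu: "f i (fst (u j) i) = inj_k r j (b j i)" "(b j i, snd (u j) i, b j (nxt n i)) \<in> Et (Ts j) i"
    if "j < r" "i < n" for j i using Dk_data[OF that(1) uc(1)[OF that(1)] that(2)] unfolding b_def by auto
  have fu': "f i (fst (u' j) i) = inj_k r j (b' j i)" "(b' j i, snd (u' j) i, b' j (nxt n i)) \<in> Et (Ts j) i"
    if "j < r" "i < n" for j i using Dk_data[OF that(1) uc(2)[OF that(1)] that(2)] unfolding b'_def by auto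
  have uT: "fst (u j) i \<in> Vt T i" "fst (u' j) i \<in> Vt T i" if "j < r" "i < n" for j i
    using cyc_V[OF LT cycD_T[OF uc(1)[OF that(1)]] that(2)] cyc_V[OF LT cycD_T[OF uc(2)[OF that(1)]] that(2)] by auto
  have sumf: "f i (fst (\<Sum>j<r. u j) i) = enc r (\<lambda>j. b j i)" if i: "i < n" for i
  proof -
    have mem: "\<forall>j\<in>{..<r}. fst (u j) i \<in> Vt T i" using uT i by auto
    have "f i (fst (\<Sum>j<r. u j) i) = f i (\<Sum>j<r. fst (u j) i)" by (simp only: fst_sum_app)
    also have "\<dots> = (\<Sum>j<r. f i (fst (u j) i))" using fsum[OF i mem] .
    also have "\<dots> = (\<Sum>j<r. inj_k r j (b j i))" using fu i by (auto intro: sum.cong)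
    also have "\<dots> = enc r (\<lambda>j. b j i)" by (rule inj_sum)
    finally show ?thesis .
  qed
  have sumf': "f i (fst (\<Sum>j<r. u' j) i) = enc r (\<lambda>j. b' j i)" if i: "i < n" for i
  proof -
    have mem: "\<forall>j\<in>{..<r}. fst (u' j) i \<in> Vt T i" using uT i by auto
    have "f i (fst (\<Sum>j<r. u' j) i) = f i (\<Sum>j<r. fst (u' j) i)" by (simp only: fst_sum_app)
    also have "\<dots> = (\<Sum>j<r. f i (fst (u' j) i))" using fsum[OF i mem] .
    also have "\<dots> = (\<Sum>j<r. inj_k r j (b' j i))" using fu' i by (auto intro: sum.cong)
    also have "\<dots> = enc r (\<lambda>j. b' j i)" by (rule inj_sum)
    finally show ?thesis .
  qed
  have beq: "b j i = b' j i" if "j < r" "i < n" for j i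
  proof -
    have "enc r (\<lambda>j. b j i) = enc r (\<lambda>j. b' j i)" using sumf[OF that(2)] sumf'[OF that(2)] H by simp
    thus ?thesis using enc_inj that(1) by fastforce
  qed
  have veq: "fst (u j) i = fst (u' j) i" if "j < r" "i < n" for j i
    using finj[OF that(2) uT[OF that]] fu(1)[OF that] fu'(1)[OF that] beq[OF that] by simp
  have leq: "snd (u j) i = snd (u' j) i" if "j < r" "i < n" for j i
  proof -
    have i: "i < n" by fact
    define c where "c j = snd (u j) i - snd (u' j) i" for j
    have cE: "\<forall>j<r. (0, c j, 0) \<in> Et (Ts j) i"
    proof (intro allI impI)
      fix j assume j: "j < r"
      have "(b j i, snd (u j) i, b j (nxt n i)) - (b' j i, snd (u' j) i, b' j (nxt n i)) \<in> Et (Ts j) i"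
        by (rule Ediff[OF LTs[rule_format, OF j] i fu(2)[OF j i] fu'(2)[OF j i]])
      thus "(0, c j, 0) \<in> Et (Ts j) i" using beq[OF j i] beq[OF j nx] by (simp add: c_def)
    qed
    have "(\<Sum>j<r. c j) = snd (\<Sum>j<r. u j) i - snd (\<Sum>j<r. u' j) i"
      by (simp add: c_def snd_sum_app sum_subtractf)
    also have "\<dots> = 0" using H by simp
    finally have "\<forall>j<r. c j = 0" using lab_unique[OF LTs DIM i cE] by blast
    thus ?thesis using that(1) by (simp add: c_def)
  qed
  show "u k = u' k"
  proof (rule prod_eqI; rule ext)
    fix i show "fst (u k) i = fst (u' k) i"
      using veq[OF k] cycD_T[OF uc(1)[OF k]] cycD_T[OF uc(2)[OF k]]
      by (cases "i < n") (auto simp: cycles_iff)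
  next
    fix i show "snd (u k) i = snd (u' k) i"
      using leq[OF k] cycD_T[OF uc(1)[OF k]] cycD_T[OF uc(2)[OF k]]
      by (cases "i < n") (auto simp: cycles_iff)
  qed
qed

end


lemma split_k: "k < (r::nat) \<Longrightarrow> (\<Sum>j<r. u j) = u k + (\<Sum>j<r. if j = k then 0 else (u j :: 'b::comm_monoid_add))"
proof -
  assume k: "k < r"
  have "(\<Sum>j<r. u j) = (\<Sum>j<r. (if j = k then u k else 0) + (if j = k then 0 else u j))"
    by (rule sum.cong) auto
  also have "\<dots> = (\<Sum>j<r. if j = k then u k else 0) + (\<Sum>j<r. if j = k then 0 else u j)"
    by (rule sum.distrib)
  also have "(\<Sum>j<r. if j = k then u k else 0) = u k" using k by (rule sum_delta_lt)
  finally show ?thesis .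
qed

lemma fst_csc: "fst (csc c x) i = vsc c (fst x i)" by (cases x) (simp add: csc_def)
lemma snd_csc: "snd (csc c x) i = c * snd x i" by (cases x) (simp add: csc_def)

locale decS =
  fixes n r :: nat and T :: "('a::field) trellis" and S :: "nat \<Rightarrow> 'a cyc set"
  assumes n1: "n \<ge> 1" and LT: "linear_trellis n T" and RED: "reduced n T"
    and Ssub: "\<forall>k<r. S k \<subseteq> cycles n T \<and> module.subspace csc (S k)"
    and DS: "\<forall>s. valid_span n s \<longrightarrow> direct_sum (span_cycles n s T) (\<lambda>k. S k \<inter> span_cycles n s T) r"
begin

lemma SC: "k < r \<Longrightarrow> x \<in> S k \<Longrightarrow> x \<in> cycles n T" using Ssub by blast

lemma Ssp: "k < r \<Longrightarrow> 0 \<in> S k \<and> (\<forall>x\<in>S k. \<forall>y\<in>S k. x+y \<in> S k) \<and> (\<forall>c. \<forall>x\<in>S k. csc c x \<in> S k)"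
  using Ssub subsp_D[OF vs_csc] by blast

lemma S0: "k < r \<Longrightarrow> 0 \<in> S k" using Ssp by blast
lemma Sadd: "k < r \<Longrightarrow> x \<in> S k \<Longrightarrow> y \<in> S k \<Longrightarrow> x + y \<in> S k" using Ssp by blast
lemma Scsc: "k < r \<Longrightarrow> x \<in> S k \<Longrightarrow> csc c x \<in> S k" using Ssp by blast
lemma Sneg: "k < r \<Longrightarrow> x \<in> S k \<Longrightarrow> - x \<in> S k" using Scsc csc_m1 by metis
lemma Sdiff: "k < r \<Longrightarrow> x \<in> S k \<Longrightarrow> y \<in> S k \<Longrightarrow> x - y \<in> S k"
  using Sadd Sneg by (metis diff_conv_add_uminus)
lemma Ssum: "k < r \<Longrightarrow> (\<forall>j\<in>A. x j \<in> S k) \<Longrightarrow> (\<Sum>j\<in>A. x j) \<in> S k"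
  by (induction A rule: infinite_finite_induct) (auto simp: S0 Sadd)

lemma DSe: "valid_span n s \<Longrightarrow> x \<in> span_cycles n s T \<Longrightarrow>
   \<exists>w. (\<forall>k<r. w k \<in> S k \<and> w k \<in> span_cycles n s T) \<and> x = (\<Sum>k<r. w k)"
proof -
  assume vs: "valid_span n s" and x: "x \<in> span_cycles n s T"
  have "direct_sum (span_cycles n s T) (\<lambda>k. S k \<inter> span_cycles n s T) r" using DS vs by blast
  hence eq: "span_cycles n s T = {\<Sum>k<r. u k | u. \<forall>k<r. u k \<in> S k \<inter> span_cycles n s T}"
    unfolding direct_sum_def by (rule conjunct1)
  have "x \<in> {\<Sum>k<r. u k | u. \<forall>k<r. u k \<in> S k \<inter> span_cycles n s T}" using x eq by simp
  then obtain u where "x = (\<Sum>k<r. u k)" "\<forall>k<r. u k \<in> S k \<inter> span_cycles n s T"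
    unfolding mem_Collect_eq by blast
  thus ?thesis by blast
qed

lemma full_eq: "span_cycles n SFull T = cycles n T"
  by (simp add: span_cycles_def hs_Full)

lemma uniq: "(\<forall>k<r. u k \<in> S k \<and> u' k \<in> S k) \<Longrightarrow> (\<Sum>k<r. u k) = (\<Sum>k<r. u' k) \<Longrightarrow> k < r \<Longrightarrow> u k = u' k"
proof -
  assume a: "\<forall>k<r. u k \<in> S k \<and> u' k \<in> S k" "(\<Sum>k<r. u k) = (\<Sum>k<r. u' k)" "k < r"
  have vF: "valid_span n SFull" by (simp add: valid_span_def)
  have "direct_sum (span_cycles n SFull T) (\<lambda>k. S k \<inter> span_cycles n SFull T) r"
    using DS vF by blast
  hence H: "\<forall>u u'. (\<forall>k<r. u k \<in> S k \<inter> span_cycles n SFull T \<and> u' k \<in> S k \<inter> span_cycles n SFull T) \<and> (\<Sum>k<r. u k) = (\<Sum>k<r. u' k)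
              \<longrightarrow> (\<forall>k<r. u k = u' k)" unfolding direct_sum_def by (rule conjunct2)
  have "(\<forall>k<r. u k \<in> S k \<inter> span_cycles n SFull T \<and> u' k \<in> S k \<inter> span_cycles n SFull T) \<and> (\<Sum>k<r. u k) = (\<Sum>k<r. u' k)"
  proof (rule conjI)
    show "\<forall>k<r. u k \<in> S k \<inter> span_cycles n SFull T \<and> u' k \<in> S k \<inter> span_cycles n SFull T"
      unfolding full_eq using a(1) SC by blast
    show "(\<Sum>k<r. u k) = (\<Sum>k<r. u' k)" by (rule a(2))
  qed
  from H[THEN spec, THEN spec, THEN mp, OF this] show ?thesis using a(3) by blast
qed

lemma uniq0: "(\<forall>k<r. u k \<in> S k) \<Longrightarrow> (\<Sum>k<r. u k) = 0 \<Longrightarrow> k < r \<Longrightarrow> u k = 0"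
proof -
  assume a: "\<forall>k<r. u k \<in> S k" "(\<Sum>k<r. u k) = 0" "k < r"
  have h1: "\<forall>k<r. u k \<in> S k \<and> (\<lambda>_. 0) k \<in> S k" using a(1) S0 by blast
  have h2: "(\<Sum>k<r. u k) = (\<Sum>k<r. (\<lambda>_. 0) k)" using a(2) by (simp only: sum.neutral_const)
  from uniq[of u "\<lambda>_. 0" k, OF h1 h2 a(3)] show ?thesis .
qed

lemma decomp: "x \<in> cycles n T \<Longrightarrow> \<exists>u. (\<forall>k<r. u k \<in> S k) \<and> x = (\<Sum>k<r. u k)"
proof -
  assume "x \<in> cycles n T"
  hence "x \<in> span_cycles n SFull T" by (simp add: full_eq)
  moreover have vF: "valid_span n SFull" by (simp add: valid_span_def)
  ultimately obtain w where "\<forall>k<r. w k \<in> S k \<and> w k \<in> span_cycles n SFull T" "x = (\<Sum>k<r. w k)"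
    using DSe by blast
  thus ?thesis by blast
qed

lemma sumC: "(\<forall>k<r. u k \<in> S k) \<Longrightarrow> (\<Sum>k<r. u k) \<in> cycles n T"
proof -
  assume "\<forall>k<r. u k \<in> S k"
  hence "\<forall>k\<in>{..<r}. u k \<in> cycles n T" using SC by blast
  thus ?thesis by (rule cyc_sum[OF LT])
qed

lemma nx: "nxt n i < n" using nxt_lt[OF n1] .

lemma stepA:
  assumes i: "i < n" and u: "\<forall>k<r. u k \<in> S k" and u': "\<forall>k<r. u' k \<in> S k"
    and e: "fst (\<Sum>k<r. u k) i = fst (\<Sum>k<r. u' k) i" and k: "k < r"
  shows "fst (u k) i = fst (u' k) i"
proof -
  define d where "d k = u k - u' k" for k
  have dS: "\<forall>k<r. d k \<in> S k" using u u' Sdiff by (simp add: d_def)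
  define x where "x = (\<Sum>k<r. d k)"
  have xc: "x \<in> cycles n T" unfolding x_def by (rule sumC[OF dS])
  have xi: "fst x i = 0" using e by (simp add: x_def d_def sum_subtractf)
  have vs: "valid_span n (Sp i (n - 1))" using i n1 by (simp add: valid_span_def)
  have "has_span n (Sp i (n - 1)) x"
  proof -
    have "{m. m < n \<and> fst x m \<noteq> 0} \<subseteq> halfopen_iv n i (n - 1)"
      using xi closed_all[OF i] by (auto simp: halfopen_iv_def)
    moreover have "{m. m < n \<and> snd x m \<noteq> 0} \<subseteq> closed_iv n i (n - 1)"
      using closed_all[OF i] by auto
    ultimately show ?thesis using hs_Sp[of n i "n - 1" "fst x" "snd x"] by simp
  qed
  hence "x \<in> span_cycles n (Sp i (n - 1)) T" using xc by (simp add: span_cycles_def)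
  then obtain w where w: "\<forall>k<r. w k \<in> S k \<and> w k \<in> span_cycles n (Sp i (n - 1)) T" and xw: "x = (\<Sum>k<r. w k)"
    using DSe[OF vs] by blast
  have "w k = d k" using uniq[of w d k] w dS xw k by (simp add: x_def)
  moreover have "fst (w k) i = 0"
  proof -
    have "has_span n (Sp i (n - 1)) (fst (w k), snd (w k))" using w k by (simp add: span_cycles_def)
    hence "{m. m < n \<and> fst (w k) m \<noteq> 0} \<subseteq> halfopen_iv n i (n - 1)" unfolding hs_Sp by blast
    thus ?thesis using i a_notin_halfopen by blast
  qed
  ultimately show ?thesis by (simp add: d_def)
qed

end


context decS begin

abbreviation Tk :: "nat \<Rightarrow> 'a trellis" where "Tk k \<equiv> sub_trellis n (S k)"

lemma RE: "i < n \<Longrightarrow> e \<in> Et T i \<Longrightarrow> \<exists>x\<in>cycles n T. e = (fst x i, snd x i, fst x (nxt n i))"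
  using RED unfolding reduced_def case_prod_unfold by blast

lemma VT: "i < n \<Longrightarrow> v \<in> Vt T i \<Longrightarrow> \<exists>u. (\<forall>k<r. u k \<in> S k) \<and> v = fst (\<Sum>k<r. u k) i"
proof -
  assume i: "i < n" and v: "v \<in> Vt T i"
  have "\<exists>\<alpha> w. (v, \<alpha>, w) \<in> Et T i" using LT i v unfolding linear_trellis_def is_trellis_def by blast
  then obtain \<alpha> w where e: "(v, \<alpha>, w) \<in> Et T i" by blast
  obtain x where x: "x \<in> cycles n T" "(v, \<alpha>, w) = (fst x i, snd x i, fst x (nxt n i))"
    using RE[OF i e] by blast
  obtain u where u: "\<forall>k<r. u k \<in> S k" "x = (\<Sum>k<r. u k)" using decomp[OF x(1)] by blast
  show ?thesis using u x(2) by blast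
qed

definition cmp :: "nat \<Rightarrow> 'a vert \<Rightarrow> nat \<Rightarrow> 'a cyc" where
  "cmp i v = (SOME u. (\<forall>k<r. u k \<in> S k) \<and> v = fst (\<Sum>k<r. u k) i)"

definition F :: "nat \<Rightarrow> 'a vert \<Rightarrow> 'a vert" where
  "F i v = enc r (\<lambda>k. fst (cmp i v k) i)"

lemma Fcomp: "i < n \<Longrightarrow> \<forall>k<r. u k \<in> S k \<Longrightarrow> F i (fst (\<Sum>k<r. u k) i) = enc r (\<lambda>k. fst (u k) i)"
proof -
  assume i: "i < n" and u: "\<forall>k<r. u k \<in> S k"
  define v where "v = fst (\<Sum>k<r. u k) i"
  have "\<exists>u'. (\<forall>k<r. u' k \<in> S k) \<and> v = fst (\<Sum>k<r. u' k) i" using u v_def by blast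
  hence c: "(\<forall>k<r. cmp i v k \<in> S k) \<and> v = fst (\<Sum>k<r. cmp i v k) i"
    unfolding cmp_def by (rule someI_ex)
  have cS: "\<forall>k<r. cmp i v k \<in> S k" using c by (rule conjunct1)
  have cv: "v = fst (\<Sum>k<r. cmp i v k) i" using c by (rule conjunct2)
  have ee: "fst (\<Sum>k<r. cmp i v k) i = fst (\<Sum>k<r. u k) i" using trans[OF cv[symmetric] v_def] .
  have eq: "fst (cmp i v k) i = fst (u k) i" if "k < r" for k
    by (rule stepA[OF i cS u ee that])
  have "F i v = enc r (\<lambda>k. fst (u k) i)" unfolding F_def by (rule enc_cong) (rule eq)
  thus ?thesis unfolding v_def .
qed

lemma Vsub: "i < n \<Longrightarrow> y \<in> Vt (Tk k) i \<longleftrightarrow> (\<exists>x\<in>S k. y = fst x i)"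
  apply (simp add: sub_trellis_def)
  apply (rule iffI)
   apply (metis fst_conv)
  by (metis prod.collapse)

lemma Esub: "i < n \<Longrightarrow> e \<in> Et (Tk k) i \<longleftrightarrow> (\<exists>x\<in>S k. e = (fst x i, snd x i, fst x (nxt n i)))"
  apply (simp add: sub_trellis_def)
  apply (rule iffI)
   apply (metis fst_conv snd_conv)
  by (metis prod.collapse)

lemma Fsingle: "k < r \<Longrightarrow> x \<in> S k \<Longrightarrow> i < n \<Longrightarrow> F i (fst x i) = inj_k r k (fst x i)"
proof -
  assume k: "k < r" and x: "x \<in> S k" and i: "i < n"
  define u where "u j = (if j = k then x else 0)" for j
  have uS: "\<forall>j<r. u j \<in> S j" using x S0 by (simp add: u_def)
  have "(\<Sum>j<r. u j) = x" unfolding u_def using k by (rule sum_delta_lt)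
  hence "F i (fst x i) = enc r (\<lambda>j. fst (u j) i)" using Fcomp[OF i uS] by simp
  also have "(\<lambda>j. fst (u j) i) = (\<lambda>j. if j = k then fst x i else 0)" by (auto simp: u_def fun_eq_iff)
  finally show ?thesis by (simp add: inj_k_def)
qed

lemma Finj: "i < n \<Longrightarrow> x \<in> Vt T i \<Longrightarrow> y \<in> Vt T i \<Longrightarrow> F i x = F i y \<Longrightarrow> x = y"
proof -
  assume i: "i < n" and x: "x \<in> Vt T i" and y: "y \<in> Vt T i" and e: "F i x = F i y"
  obtain u where u: "\<forall>k<r. u k \<in> S k" "x = fst (\<Sum>k<r. u k) i" using VT[OF i x] by blast
  obtain u' where u': "\<forall>k<r. u' k \<in> S k" "y = fst (\<Sum>k<r. u' k) i" using VT[OF i y] by blast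
  have "enc r (\<lambda>k. fst (u k) i) = enc r (\<lambda>k. fst (u' k) i)"
    using e Fcomp[OF i u(1)] Fcomp[OF i u'(1)] u(2) u'(2) by simp
  hence "fst (u k) i = fst (u' k) i" if "k < r" for k using enc_inj that by fastforce
  hence "(\<Sum>k<r. fst (u k) i) = (\<Sum>k<r. fst (u' k) i)" by (intro sum.cong) auto
  thus ?thesis using u(2) u'(2) by (simp add: fst_sum_app)
qed

end


lemma vsc_sum: "vsc c (\<Sum>k\<in>A. v k) = (\<Sum>k\<in>A. vsc c (v k))"
  by (simp add: vsc_def fun_eq_iff sum_distrib_left sum_fun_app)

context decS begin

lemma VPP: "i < n \<Longrightarrow> Vt (tprod n r (\<lambda>k. sub_trellis n (S k))) i = {enc r vs | vs. \<forall>k<r. vs k \<in> Vt (Tk k) i}"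
  by (simp add: tprod_def)

lemma EPP: "i < n \<Longrightarrow> Et (tprod n r (\<lambda>k. sub_trellis n (S k))) i =
   {(enc r vs, (\<Sum>k<r. \<alpha> k), enc r ws) | vs \<alpha> ws. \<forall>k<r. (vs k, \<alpha> k, ws k) \<in> Et (Tk k) i}"
  by (simp add: tprod_def)

lemma Flin: assumes i: "i < n" shows "linear_on (Vt T i) (F i)"
  unfolding linear_on_def
proof (intro conjI ballI allI)
  fix x y assume x: "x \<in> Vt T i" and y: "y \<in> Vt T i"
  obtain u where u: "\<forall>k<r. u k \<in> S k" "x = fst (\<Sum>k<r. u k) i" using VT[OF i x] by blast
  obtain u' where u': "\<forall>k<r. u' k \<in> S k" "y = fst (\<Sum>k<r. u' k) i" using VT[OF i y] by blast
  have uu: "\<forall>k<r. u k + u' k \<in> S k" using u(1) u'(1) Sadd by blast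
  have "x + y = fst (\<Sum>k<r. u k + u' k) i" using u(2) u'(2) by (simp add: fst_sum_app sum.distrib)
  hence "F i (x + y) = enc r (\<lambda>k. fst (u k + u' k) i)" using Fcomp[OF i uu] by simp
  also have "\<dots> = enc r (\<lambda>k. fst (u k) i + fst (u' k) i)" by simp
  also have "\<dots> = enc r (\<lambda>k. fst (u k) i) + enc r (\<lambda>k. fst (u' k) i)" by (rule enc_add)
  also have "\<dots> = F i x + F i y" using Fcomp[OF i u(1)] Fcomp[OF i u'(1)] u(2) u'(2) by simp
  finally show "F i (x + y) = F i x + F i y" .
next
  fix c x assume x: "x \<in> Vt T i"
  obtain u where u: "\<forall>k<r. u k \<in> S k" "x = fst (\<Sum>k<r. u k) i" using VT[OF i x] by blast
  have uc: "\<forall>k<r. csc c (u k) \<in> S k" using Scsc u(1) by blast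
  have "vsc c x = fst (\<Sum>k<r. csc c (u k)) i"
    using u(2) by (simp add: fst_sum_app fst_csc vsc_sum)
  hence "F i (vsc c x) = enc r (\<lambda>k. fst (csc c (u k)) i)" using Fcomp[OF i uc] by simp
  also have "\<dots> = enc r (\<lambda>k. vsc c (fst (u k) i))" by (simp add: fst_csc)
  also have "\<dots> = vsc c (enc r (\<lambda>k. fst (u k) i))" by (rule enc_vsc)
  also have "\<dots> = vsc c (F i x)" using Fcomp[OF i u(1)] u(2) by simp
  finally show "F i (vsc c x) = vsc c (F i x)" .
qed

lemma Fbij: assumes i: "i < n" shows "bij_betw (F i) (Vt T i) (Vt (tprod n r (\<lambda>k. sub_trellis n (S k))) i)"
  unfolding bij_betw_def
proof
  show "inj_on (F i) (Vt T i)" using Finj[OF i] by (meson inj_onI)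
  show "F i ` Vt T i = Vt (tprod n r (\<lambda>k. sub_trellis n (S k))) i"
  proof (intro equalityI subsetI)
    fix y assume "y \<in> F i ` Vt T i"
    then obtain x where x: "x \<in> Vt T i" "y = F i x" by blast
    obtain u where u: "\<forall>k<r. u k \<in> S k" "x = fst (\<Sum>k<r. u k) i" using VT[OF i x(1)] by blast
    have "y = enc r (\<lambda>k. fst (u k) i)" using x(2) u(2) Fcomp[OF i u(1)] by simp
    moreover have "\<forall>k<r. fst (u k) i \<in> Vt (Tk k) i" using u(1) Vsub[OF i] by blast
    ultimately show "y \<in> Vt (tprod n r (\<lambda>k. sub_trellis n (S k))) i" unfolding VPP[OF i] by blast
  next
    fix y assume "y \<in> Vt (tprod n r (\<lambda>k. sub_trellis n (S k))) i"
    then obtain vs where y: "y = enc r vs" and vs: "\<forall>k<r. vs k \<in> Vt (Tk k) i"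
      unfolding VPP[OF i] by blast
    have "\<forall>k. \<exists>x. k < r \<longrightarrow> x \<in> S k \<and> vs k = fst x i" using vs Vsub[OF i] by blast
    then obtain X where X: "\<forall>k. k < r \<longrightarrow> X k \<in> S k \<and> vs k = fst (X k) i" by metis
    have XS: "\<forall>k<r. X k \<in> S k" using X by blast
    have xin: "fst (\<Sum>k<r. X k) i \<in> Vt T i" using cyc_V[OF LT sumC[OF XS] i] .
    have "enc r (\<lambda>k. fst (X k) i) = enc r vs" by (rule enc_cong) (use X in auto)
    hence "F i (fst (\<Sum>k<r. X k) i) = y" using Fcomp[OF i XS] y by simp
    thus "y \<in> F i ` Vt T i" using xin by (metis image_eqI)
  qed
qed

lemma Fedge:
  assumes i: "i < n" and v: "v \<in> Vt T i" and w: "w \<in> Vt T (nxt n i)"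
  shows "(v, \<alpha>, w) \<in> Et T i \<longleftrightarrow> (F i v, \<alpha>, F (nxt n i) w) \<in> Et (tprod n r (\<lambda>k. sub_trellis n (S k))) i"
proof
  assume e: "(v, \<alpha>, w) \<in> Et T i"
  obtain x where x: "x \<in> cycles n T" "(v, \<alpha>, w) = (fst x i, snd x i, fst x (nxt n i))" using RE[OF i e] by blast
  obtain u where u: "\<forall>k<r. u k \<in> S k" "x = (\<Sum>k<r. u k)" using decomp[OF x(1)] by blast
  have e1: "F i v = enc r (\<lambda>k. fst (u k) i)" using x(2) u(2) Fcomp[OF i u(1)] by simp
  have e2: "F (nxt n i) w = enc r (\<lambda>k. fst (u k) (nxt n i))" using x(2) u(2) Fcomp[OF nx u(1)] by simp
  have e3: "\<alpha> = (\<Sum>k<r. snd (u k) i)" using x(2) u(2) by (simp add: snd_sum_app)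
  have e4: "\<forall>k<r. (fst (u k) i, snd (u k) i, fst (u k) (nxt n i)) \<in> Et (Tk k) i" using u(1) Esub[OF i] by blast
  show "(F i v, \<alpha>, F (nxt n i) w) \<in> Et (tprod n r (\<lambda>k. sub_trellis n (S k))) i"
    unfolding EPP[OF i] e1 e2 e3 using e4 by blast
next
  assume "(F i v, \<alpha>, F (nxt n i) w) \<in> Et (tprod n r (\<lambda>k. sub_trellis n (S k))) i"
  then obtain vs al ws where h: "F i v = enc r vs" "\<alpha> = (\<Sum>k<r. al k)" "F (nxt n i) w = enc r ws"
    "\<forall>k<r. (vs k, al k, ws k) \<in> Et (Tk k) i"
    unfolding EPP[OF i] by blast
  have "\<forall>k. \<exists>x. k < r \<longrightarrow> x \<in> S k \<and> (vs k, al k, ws k) = (fst x i, snd x i, fst x (nxt n i))"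
    using h(4) Esub[OF i] by blast
  then obtain X where X: "\<forall>k. k < r \<longrightarrow> X k \<in> S k \<and> (vs k, al k, ws k) = (fst (X k) i, snd (X k) i, fst (X k) (nxt n i))"
    by metis
  have XS: "\<forall>k<r. X k \<in> S k" using X by blast
  define y where "y = (\<Sum>k<r. X k)"
  have yc: "y \<in> cycles n T" unfolding y_def by (rule sumC[OF XS])
  have "enc r (\<lambda>k. fst (X k) i) = enc r vs" by (rule enc_cong) (use X in auto)
  hence "F i (fst y i) = F i v" using Fcomp[OF i XS] h(1) by (simp add: y_def)
  hence y1: "fst y i = v" using Finj[OF i cyc_V[OF LT yc i] v] by blast
  have "enc r (\<lambda>k. fst (X k) (nxt n i)) = enc r ws" by (rule enc_cong) (use X in auto)
  hence "F (nxt n i) (fst y (nxt n i)) = F (nxt n i) w" using Fcomp[OF nx XS] h(3) by (simp add: y_def)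
  hence y2: "fst y (nxt n i) = w" using Finj[OF nx cyc_V[OF LT yc nx] w] by blast
  have "(\<Sum>k<r. snd (X k) i) = (\<Sum>k<r. al k)" by (rule sum.cong) (use X in auto)
  hence y3: "snd y i = \<alpha>" using h(2) by (simp add: y_def snd_sum_app)
  have "(fst y i, snd y i, fst y (nxt n i)) \<in> Et T i" using yc i unfolding cycles_iff by blast
  thus "(v, \<alpha>, w) \<in> Et T i" using y1 y2 y3 by simp
qed

lemma ISO1: "trellis_iso n T (tprod n r (\<lambda>k. sub_trellis n (S k))) F"
  unfolding trellis_iso_def using Flin Fbij Fedge by blast

end


context decS begin

lemma IMG: assumes k: "k < r" shows "img_trellis n F (Tk k) = copy_k n r k (Tk k)"
proof -
  have V: "(\<lambda>i. if i < n then F i ` Vt (Tk k) i else {}) = (\<lambda>i. if i < n then inj_k r k ` Vt (Tk k) i else {})"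
  proof (rule ext)
    fix i show "(if i < n then F i ` Vt (Tk k) i else {}) = (if i < n then inj_k r k ` Vt (Tk k) i else {})"
    proof (cases "i < n")
      case True
      have "F i ` Vt (Tk k) i = inj_k r k ` Vt (Tk k) i"
      proof (rule image_cong[OF refl])
        fix y assume y: "y \<in> Vt (Tk k) i"
        obtain x where x: "x \<in> S k" "y = fst x i" using Vsub[OF True, THEN iffD1, OF y] by blast
        show "F i y = inj_k r k y" unfolding x(2) by (rule Fsingle[OF k x(1) True])
      qed
      thus ?thesis using True by (simp only: if_P)
    qed simp
  qed
  have E: "(\<lambda>i. if i < n then {(F i v, \<alpha>, F (nxt n i) w) | v \<alpha> w. (v, \<alpha>, w) \<in> Et (Tk k) i} else {}) =
           (\<lambda>i. if i < n then {(inj_k r k v, \<alpha>, inj_k r k w) | v \<alpha> w. (v, \<alpha>, w) \<in> Et (Tk k) i} else {})"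
  proof (rule ext)
    fix i show "(if i < n then {(F i v, \<alpha>, F (nxt n i) w) | v \<alpha> w. (v, \<alpha>, w) \<in> Et (Tk k) i} else {}) =
           (if i < n then {(inj_k r k v, \<alpha>, inj_k r k w) | v \<alpha> w. (v, \<alpha>, w) \<in> Et (Tk k) i} else {})"
    proof (cases "i < n")
      case True
      have pt: "F i v = inj_k r k v \<and> F (nxt n i) w = inj_k r k w" if vw: "(v, \<alpha>, w) \<in> Et (Tk k) i" for v \<alpha> w
      proof -
        obtain x where x: "x \<in> S k" "(v, \<alpha>, w) = (fst x i, snd x i, fst x (nxt n i))"
          using Esub[OF True, THEN iffD1, OF vw] by blast
        thus ?thesis using Fsingle[OF k x(1) True] Fsingle[OF k x(1) nx] by simp
      qed
      have "{(F i v, \<alpha>, F (nxt n i) w) | v \<alpha> w. (v, \<alpha>, w) \<in> Et (Tk k) i} =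
            {(inj_k r k v, \<alpha>, inj_k r k w) | v \<alpha> w. (v, \<alpha>, w) \<in> Et (Tk k) i}"
      proof (rule Collect_cong)
        fix t
        show "(\<exists>v \<alpha> w. t = (F i v, \<alpha>, F (nxt n i) w) \<and> (v, \<alpha>, w) \<in> Et (Tk k) i) =
              (\<exists>v \<alpha> w. t = (inj_k r k v, \<alpha>, inj_k r k w) \<and> (v, \<alpha>, w) \<in> Et (Tk k) i)"
          using pt by metis
      qed
      thus ?thesis using True by (simp only: if_P)
    qed simp
  qed
  show ?thesis unfolding img_trellis_def copy_k_def V E by (rule refl)
qed

lemma SEQ1: "k < r \<Longrightarrow> x \<in> S k \<Longrightarrow> x \<in> cycles n (Tk k)"
proof -
  assume k: "k < r" and x: "x \<in> S k"
  have xc: "x \<in> cycles n T" using SC[OF k x] .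
  show ?thesis unfolding cycles_iff
  proof (rule conjI)
    show "\<forall>i<n. (fst x i, snd x i, fst x (nxt n i)) \<in> Et (Tk k) i"
      using Esub x by blast
    show "\<forall>i\<ge>n. fst x i = 0 \<and> snd x i = 0" using xc unfolding cycles_iff by blast
  qed
qed

end


lemma e_cyc_zero: "e_cyc i 0 = 0"
  by (simp add: e_cyc_def zero_prod_def fun_eq_iff)

context decS begin

lemma SEQ2: assumes k: "k < r" and y: "y \<in> cycles n (Tk k)" shows "y \<in> S k"
proof -
  have yE: "\<exists>x\<in>S k. (fst y i, snd y i, fst y (nxt n i)) = (fst x i, snd x i, fst x (nxt n i))" if i: "i < n" for i
  proof -
    have "(fst y i, snd y i, fst y (nxt n i)) \<in> Et (Tk k) i" using y i unfolding cycles_iff by blast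
    thus ?thesis by (rule Esub[OF i, THEN iffD1])
  qed
  have yz: "fst y i = 0 \<and> snd y i = 0" if "n \<le> i" for i using y that unfolding cycles_iff by blast
  have "\<forall>i. \<exists>x. i < n \<longrightarrow> x \<in> S k \<and> (fst y i, snd y i, fst y (nxt n i)) = (fst x i, snd x i, fst x (nxt n i))"
    using yE by blast
  then obtain X where X: "\<forall>i. i < n \<longrightarrow> X i \<in> S k \<and> (fst y i, snd y i, fst y (nxt n i)) = (fst (X i) i, snd (X i) i, fst (X i) (nxt n i))"
    by metis
  have XS: "X i \<in> S k" if "i < n" for i using X that by blast
  have Xv: "fst (X i) i = fst y i" "snd (X i) i = snd y i" "fst (X i) (nxt n i) = fst y (nxt n i)" if "i < n" for i
    using X that by auto
  have yT: "y \<in> cycles n T" unfolding cycles_iff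
  proof (rule conjI)
    show "\<forall>i<n. (fst y i, snd y i, fst y (nxt n i)) \<in> Et T i"
    proof (intro allI impI)
      fix i assume i: "i < n"
      have "X i \<in> cycles n T" using SC[OF k XS[OF i]] .
      hence "(fst (X i) i, snd (X i) i, fst (X i) (nxt n i)) \<in> Et T i" using i unfolding cycles_iff by blast
      thus "(fst y i, snd y i, fst y (nxt n i)) \<in> Et T i" using Xv[OF i] by simp
    qed
    show "\<forall>i\<ge>n. fst y i = 0 \<and> snd y i = 0" using yz by blast
  qed
  obtain u where u: "\<forall>j<r. u j \<in> S j" "y = (\<Sum>j<r. u j)" using decomp[OF yT] by blast
  have vert: "fst (u j) i = (if j = k then fst y i else 0)" if j: "j < r" and i: "i < n" for j i
  proof -
    define u'' where "u'' j = (if j = k then X i else 0)" for j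
    have u''S: "\<forall>j<r. u'' j \<in> S j" using XS[OF i] S0 by (simp add: u''_def)
    have "(\<Sum>j<r. u'' j) = X i" unfolding u''_def using k by (rule sum_delta_lt)
    hence "fst (\<Sum>j<r. u j) i = fst (\<Sum>j<r. u'' j) i" using u(2) Xv[OF i] by simp
    hence "fst (u j) i = fst (u'' j) i" by (rule stepA[OF i u(1) u''S _ j])
    thus ?thesis using Xv[OF i] by (simp add: u''_def)
  qed
  define z where "z = (\<Sum>j<r. if j = k then 0 else u j)"
  have usplit: "(\<Sum>j<r. u j) = u k + z" unfolding z_def using k by (rule split_k)
  have zmem: "\<forall>j\<in>{..<r}. (if j = k then 0 else u j) \<in> cycles n T" using u(1) SC cyc0[OF LT] by auto
  have zT: "z \<in> cycles n T" unfolding z_def by (rule cyc_sum[OF LT zmem])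
  have zv: "fst z i = 0" for i
  proof (cases "i < n")
    case True
    have "fst z i = (\<Sum>j<r. fst (if j = k then 0 else u j) i)" by (simp add: z_def fst_sum_app)
    also have "\<dots> = (\<Sum>j<r. (0::'a vert))" by (rule sum.cong) (use vert True in auto)
    finally show ?thesis by simp
  next
    case False thus ?thesis using zT unfolding cycles_iff by simp
  qed
  have eS: "e_cyc i (snd z i) \<in> S k" if i: "i < n" for i
  proof -
    have ni: "nxt n i < n" by (rule nx)
    define d where "d = u k - X i"
    have dS: "d \<in> S k" unfolding d_def using u(1) k XS[OF i] Sdiff by blast
    have d_i: "fst d i = 0" using vert[OF k i] Xv[OF i] by (simp add: d_def)
    have d_n: "fst d (nxt n i) = 0" using vert[OF k ni] Xv[OF i] by (simp add: d_def)
    have snd_y: "snd y i = snd (u k) i + snd z i" using u(2) usplit by simp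
    have d_l: "snd d i = - snd z i" using snd_y Xv[OF i] by (simp add: d_def)
    define gg where "gg = e_cyc i (snd z i)"
    have zedge: "(0, snd z i, 0) \<in> Et T i"
    proof -
      have "(fst z i, snd z i, fst z (nxt n i)) \<in> Et T i" using zT i unfolding cycles_iff by blast
      thus ?thesis using zv by simp
    qed
    have gT: "gg \<in> span_cycles n (Sp i 0) T" unfolding gg_def by (rule e_cyc_span[OF LT i zedge])
    have vs0: "valid_span n (Sp i 0)" using i n1 by (simp add: valid_span_def)
    obtain w where w: "\<forall>j<r. w j \<in> S j \<and> w j \<in> span_cycles n (Sp i 0) T" "gg = (\<Sum>j<r. w j)"
      using DSe[OF vs0 gT] by blast
    have dc: "d \<in> cycles n T" using SC[OF k dS] .
    show "e_cyc i (snd z i) \<in> S k" unfolding gg_def[symmetric]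
    proof (cases "n = 1")
      case True
      hence i0: "i = 0" using i by simp
      have "gg + d = 0"
      proof (rule prod_eqI; rule ext)
        fix m show "fst (gg + d) m = fst 0 m"
        proof (cases "m = 0")
          case True thus ?thesis using d_i i0 by (simp add: gg_def e_cyc_def)
        next
          case False hence "n \<le> m" using \<open>n = 1\<close> by simp
          thus ?thesis using dc unfolding cycles_iff by (simp add: gg_def e_cyc_def)
        qed
      next
        fix m show "snd (gg + d) m = snd 0 m"
        proof (cases "m = 0")
          case True thus ?thesis using d_l i0 by (simp add: gg_def e_cyc_def)
        next
          case False hence "n \<le> m" using \<open>n = 1\<close> by simp
          thus ?thesis using dc False i0 unfolding cycles_iff by (simp add: gg_def e_cyc_def)
        qed
      qed
      hence "gg = - d" by (simp add: eq_neg_iff_add_eq_0)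
      thus "gg \<in> S k" using Sneg[OF k dS] by simp
    next
      case False
      hence n2: "n \<ge> 2" using n1 by simp
      define c where "c = d + gg"
      have gc: "gg \<in> cycles n T" using gT by (simp add: span_cycles_def)
      have cT: "c \<in> cycles n T" unfolding c_def by (rule cyc_add[OF LT dc gc])
      have c_v: "fst c m = fst d m" for m by (simp add: c_def gg_def e_cyc_def)
      have c_l: "snd c i = 0" using d_l by (simp add: c_def gg_def e_cyc_def)
      have vsc: "valid_span n (Sp (nxt n i) (n - 2))" using ni n2 by (simp add: valid_span_def)
      have h1: "{m. m < n \<and> fst c m \<noteq> 0} \<subseteq> halfopen_iv n (nxt n i) (n - 2)"
      proof
        fix m assume "m \<in> {m. m < n \<and> fst c m \<noteq> 0}"
        hence m: "m < n" "fst c m \<noteq> 0" by auto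
        have "m \<noteq> i" using m(2) c_v d_i by auto
        moreover have "m \<noteq> nxt n i" using m(2) c_v d_n by auto
        ultimately show "m \<in> halfopen_iv n (nxt n i) (n - 2)"
          using in_closed_nxt[OF n2 i m(1)] by (simp add: halfopen_iv_def)
      qed
      have h2: "{m. m < n \<and> snd c m \<noteq> 0} \<subseteq> closed_iv n (nxt n i) (n - 2)"
      proof
        fix m assume "m \<in> {m. m < n \<and> snd c m \<noteq> 0}"
        hence m: "m < n" "snd c m \<noteq> 0" by auto
        have "m \<noteq> i" using m(2) c_l by auto
        thus "m \<in> closed_iv n (nxt n i) (n - 2)" using in_closed_nxt[OF n2 i m(1)] by simp
      qed
      have "has_span n (Sp (nxt n i) (n - 2)) (fst c, snd c)" unfolding hs_Sp using h1 h2 by blast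
      hence cS: "c \<in> span_cycles n (Sp (nxt n i) (n - 2)) T" using cT by (simp add: span_cycles_def)
      obtain c' where c': "\<forall>j<r. c' j \<in> S j \<and> c' j \<in> span_cycles n (Sp (nxt n i) (n - 2)) T" "c = (\<Sum>j<r. c' j)"
        using DSe[OF vsc cS] by blast
      define w2 where "w2 j = (if j = k then d + w j else w j)" for j
      have w2S: "\<forall>j<r. w2 j \<in> S j" using w(1) dS Sadd k by (simp add: w2_def)
      have "(\<Sum>j<r. w2 j) = (\<Sum>j<r. w j + (if j = k then d else 0))"
        by (rule sum.cong) (auto simp: w2_def)
      also have "\<dots> = (\<Sum>j<r. w j) + d" using k by (simp add: sum.distrib sum_delta_lt)
      finally have "(\<Sum>j<r. c' j) = (\<Sum>j<r. w2 j)" using c'(2) w(2) by (simp add: c_def add.commute)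
      hence cw: "c' j = w2 j" if "j < r" for j using uniq[of c' w2 j] c'(1) w2S that by blast
      have wj0: "w j = 0" if j: "j < r" "j \<noteq> k" for j
      proof -
        have eq: "c' j = w j" using cw[OF j(1)] j(2) by (simp add: w2_def)
        have wf: "w j = e_cyc i (snd (w j) i)" using span0_form[OF LT i] w(1) j(1) by blast
        have "has_span n (Sp (nxt n i) (n - 2)) (fst (c' j), snd (c' j))" using c'(1) j(1) by (simp add: span_cycles_def)
        hence "{m. m < n \<and> snd (c' j) m \<noteq> 0} \<subseteq> closed_iv n (nxt n i) (n - 2)" unfolding hs_Sp by blast
        hence "snd (c' j) i = 0" using i not_in_closed_nxt[OF n2 i] by blast
        hence "snd (w j) i = 0" using eq by simp
        thus ?thesis using wf e_cyc_zero by simp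
      qed
      have "(\<Sum>j<r. w j) = (\<Sum>j<r. if j = k then w k else 0)" by (rule sum.cong) (auto simp: wj0)
      also have "\<dots> = w k" using k by (rule sum_delta_lt)
      finally show "gg \<in> S k" using w k by simp
    qed
  qed
  have zS: "z \<in> S k"
  proof -
    have "z = (\<Sum>i<n. e_cyc i (snd z i))"
    proof (rule prod_eqI; rule ext)
      fix m show "fst z m = fst (\<Sum>i<n. e_cyc i (snd z i)) m"
        by (simp add: zv fst_sum_app e_cyc_def)
    next
      fix m show "snd z m = snd (\<Sum>i<n. e_cyc i (snd z i)) m"
      proof (cases "m < n")
        case True thus ?thesis by (simp add: snd_sum_app e_cyc_def)
      next
        case False thus ?thesis using zT unfolding cycles_iff by (auto simp: snd_sum_app e_cyc_def)
      qed
    qed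
    moreover have "(\<Sum>i<n. e_cyc i (snd z i)) \<in> S k" by (rule Ssum[OF k]) (use eS in auto)
    ultimately show ?thesis by simp
  qed
  define w3 where "w3 j = (if j = k then u k + z else 0)" for j
  have w3S: "\<forall>j<r. w3 j \<in> S j" using u(1) zS Sadd S0 k by (simp add: w3_def)
  have "(\<Sum>j<r. w3 j) = u k + z" unfolding w3_def using k by (rule sum_delta_lt)
  hence sw: "(\<Sum>j<r. u j) = (\<Sum>j<r. w3 j)" using usplit by simp
  have others: "u j = 0" if "j < r" "j \<noteq> k" for j
    using uniq[of u w3 j] u(1) w3S sw that by (simp add: w3_def)
  have "z = (\<Sum>j<r. (0::'a cyc))" unfolding z_def by (rule sum.cong) (auto simp: others)
  hence "z = 0" by simp
  hence "y = u k" using u(2) usplit by simp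
  thus ?thesis using u(1) k by simp
qed

lemma SEQ: "k < r \<Longrightarrow> S k = cycles n (Tk k)"
  using SEQ1 SEQ2 by blast

end


theorem mainTheorem4:
  fixes n :: nat and T :: "('a::{field,finite}) trellis"
  assumes "n \<ge> 1"
    and "linear_trellis n T"
    and "reduced n T"
  shows
   "(\<forall>(r::nat) (S :: nat \<Rightarrow> 'a cyc set).
       (\<forall>k<r. S k \<subseteq> cycles n T \<and> module.subspace csc (S k)) \<and>
       (\<forall>s. valid_span n s \<longrightarrow>
            direct_sum (span_cycles n s T) (\<lambda>k. S k \<inter> span_cycles n s T) r)
       \<longrightarrow>
       (\<forall>k<r. S k = cycles n (sub_trellis n (S k))) \<and>
       (\<exists>f. trellis_iso n T (tprod n r (\<lambda>k. sub_trellis n (S k))) f \<and>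
            (\<forall>k<r. img_trellis n f (sub_trellis n (S k)) =
                    copy_k n r k (sub_trellis n (S k))))) \<and>
    (\<forall>(r::nat) (Ts :: nat \<Rightarrow> 'a trellis) f.
       (\<forall>k<r. linear_trellis n (Ts k)) \<and>
       (\<forall>a<n. (\<Sum>k<r. vector_space.dim csc (span_cycles n (Sp a 0) (Ts k))) \<le> 1) \<and>
       trellis_iso n T (tprod n r Ts) f
       \<longrightarrow>
       (\<forall>s. valid_span n s \<longrightarrow>
            direct_sum (span_cycles n s T)
              (\<lambda>k. span_cycles n s (preimg_trellis n f T (copy_k n r k (Ts k)))) r))"
  proof (rule conjI)
  show "\<forall>(r::nat) (S :: nat \<Rightarrow> 'a cyc set).
       (\<forall>k<r. S k \<subseteq> cycles n T \<and> module.subspace csc (S k)) \<and>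
       (\<forall>s. valid_span n s \<longrightarrow>
            direct_sum (span_cycles n s T) (\<lambda>k. S k \<inter> span_cycles n s T) r)
       \<longrightarrow>
       (\<forall>k<r. S k = cycles n (sub_trellis n (S k))) \<and>
       (\<exists>f. trellis_iso n T (tprod n r (\<lambda>k. sub_trellis n (S k))) f \<and>
            (\<forall>k<r. img_trellis n f (sub_trellis n (S k)) =
                    copy_k n r k (sub_trellis n (S k))))"
  proof (intro allI impI)
    fix r :: nat and S :: "nat \<Rightarrow> 'a cyc set"
    assume h: "(\<forall>k<r. S k \<subseteq> cycles n T \<and> module.subspace csc (S k)) \<and>
       (\<forall>s. valid_span n s \<longrightarrow>
            direct_sum (span_cycles n s T) (\<lambda>k. S k \<inter> span_cycles n s T) r)"
    interpret decS n r T S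
      by (rule decS.intro) (use assms h in auto)
    show "(\<forall>k<r. S k = cycles n (sub_trellis n (S k))) \<and>
       (\<exists>f. trellis_iso n T (tprod n r (\<lambda>k. sub_trellis n (S k))) f \<and>
            (\<forall>k<r. img_trellis n f (sub_trellis n (S k)) =
                    copy_k n r k (sub_trellis n (S k))))"
      using SEQ ISO1 IMG by blast
  qed
next
  show "\<forall>(r::nat) (Ts :: nat \<Rightarrow> 'a trellis) f.
       (\<forall>k<r. linear_trellis n (Ts k)) \<and>
       (\<forall>a<n. (\<Sum>k<r. vector_space.dim csc (span_cycles n (Sp a 0) (Ts k))) \<le> 1) \<and>
       trellis_iso n T (tprod n r Ts) f
       \<longrightarrow>
       (\<forall>s. valid_span n s \<longrightarrow>
            direct_sum (span_cycles n s T)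
              (\<lambda>k. span_cycles n s (preimg_trellis n f T (copy_k n r k (Ts k)))) r)"
  proof (intro allI impI)
    fix r :: nat and Ts :: "nat \<Rightarrow> 'a trellis" and f and s
    assume h: "(\<forall>k<r. linear_trellis n (Ts k)) \<and>
       (\<forall>a<n. (\<Sum>k<r. vector_space.dim csc (span_cycles n (Sp a 0) (Ts k))) \<le> 1) \<and>
       trellis_iso n T (tprod n r Ts) f"
      and vs: "valid_span n s"
    interpret isoS n r T Ts f
      by (rule isoS.intro) (use assms h in auto)
    have DIM: "\<forall>a<n. (\<Sum>k<r. csc.dim (span_cycles n (Sp a 0) (Ts k))) \<le> 1" using h by blast
    show "direct_sum (span_cycles n s T)
              (\<lambda>k. span_cycles n s (preimg_trellis n f T (copy_k n r k (Ts k)))) r"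
      using part2[OF DIM vs] unfolding D_def .
  qed
qed

end
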